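(* Let $\alpha:[a,b]\to S^2$ be smooth and $f:[a,b]\to\mathbb{R}_+$ be smooth and positive, and suppose the integral curve $\beta(t)=\int_a^t f(s)\alpha(s)\,ds$ is a round $\epsilon$-suspension. Then for every $k\in[\tfrac12,\tfrac32]$ there is a positive function $g:[a,b]\to\mathbb{R}_+$ such that (i) $g(t)=f(t)$ for $t$ near $a$ and near $b$, and (ii) the integral curve $\gamma(t)=\int_a^t g(s)\alpha(s)\,ds$ is a $(k\epsilon)$-suspension with $\gamma(b)-\gamma(a)=k(\beta(b)-\beta(a))$.
   Context: $S^2$ is the unit sphere in $\mathbb{R}^3$, $\mathbb{R}_+=\{x>0\}$. A smooth arc $\beta:[a,b]\to\mathbb{R}^3$ is an $\epsilon$-suspension if it is an embedding into an isosceles triangle $\Delta$ whose base is the segment from $\beta(a)$ to $\beta(b)$ and whose height is $\epsilon$. It is a round $\epsilon$-suspension if moreover its image is a subarc of a round circle and $\|\beta'(t)\|$ is constant. *)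

theory Defs
  imports "HOL-Analysis.Analysis"
begin

(* C^infinity on a set S (one-sided derivatives at endpoints of an interval):
   there is a sequence of successive derivatives D 0 = f, D (n+1) = (D n)'. *)
definition smooth_on :: "real set \<Rightarrow> (real \<Rightarrow> 'a::real_normed_vector) \<Rightarrow> bool" where
  "smooth_on S f \<longleftrightarrow> (\<exists>D. D 0 = f \<and>
      (\<forall>n. \<forall>t\<in>S. (D n has_vector_derivative D (Suc n) t) (at t within S)))"

definition isosceles_triangle :: "real^3 \<Rightarrow> real^3 \<Rightarrow> real \<Rightarrow> (real^3) set \<Rightarrow> bool" where
  "isosceles_triangle p q h T \<longleftrightarrow> (\<exists>x. (x - midpoint p q) \<bullet> (q - p) = 0 \<and>
      norm (x - midpoint p q) = h \<and> T = convex hull {p, q, x})"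

definition suspension :: "real \<Rightarrow> real \<Rightarrow> real \<Rightarrow> (real \<Rightarrow> real^3) \<Rightarrow> bool" where
  "suspension eps a b \<beta> \<longleftrightarrow> smooth_on {a..b} \<beta> \<and> inj_on \<beta> {a..b} \<and>
      (\<exists>T. isosceles_triangle (\<beta> a) (\<beta> b) eps T \<and> \<beta> ` {a..b} \<subseteq> T)"

definition round_circle :: "(real^3) set \<Rightarrow> bool" where
  "round_circle C \<longleftrightarrow> (\<exists>c r n. r > 0 \<and> n \<noteq> 0 \<and>
      C = {x. dist x c = r \<and> (x - c) \<bullet> n = 0})"

definition round_suspension :: "real \<Rightarrow> real \<Rightarrow> real \<Rightarrow> (real \<Rightarrow> real^3) \<Rightarrow> bool" where
  "round_suspension eps a b \<beta> \<longleftrightarrow> suspension eps a b \<beta> \<and>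
      (\<exists>C. round_circle C \<and> \<beta> ` {a..b} \<subseteq> C) \<and>
      (\<exists>c. \<forall>t\<in>{a..b}. \<exists>v. (\<beta> has_vector_derivative v) (at t within {a..b}) \<and> norm v = c)"

end

theory Submission
  imports Defs
begin

lemma smooth_on_subset:
  assumes "smooth_on S f" "T \<subseteq> S" shows "smooth_on T f"
proof -
  obtain D where D: "D 0 = f" "\<forall>n. \<forall>t\<in>S. (D n has_vector_derivative D (Suc n) t) (at t within S)"
    using assms(1) unfolding smooth_on_def by blast
  show ?thesis unfolding smooth_on_def
    using D assms(2) by (intro exI[of _ D]) (auto intro: has_vector_derivative_within_subset)
qed

lemma smooth_on_derivI:
  assumes "\<And>t. t \<in> S \<Longrightarrow> (f has_vector_derivative f' t) (at t within S)" "smooth_on S f'"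
  shows "smooth_on S f"
proof -
  obtain D where D: "D 0 = f'" "\<forall>n. \<forall>t\<in>S. (D n has_vector_derivative D (Suc n) t) (at t within S)"
    using assms(2) unfolding smooth_on_def by blast
  define D' where "D' n = (case n of 0 \<Rightarrow> f | Suc m \<Rightarrow> D m)" for n
  have "\<forall>n. \<forall>t\<in>S. (D' n has_vector_derivative D' (Suc n) t) (at t within S)"
  proof (intro allI ballI)
    fix n t assume t: "t \<in> S"
    show "(D' n has_vector_derivative D' (Suc n) t) (at t within S)"
      using D assms(1)[OF t] t by (cases n) (auto simp: D'_def)
  qed
  moreover have "D' 0 = f" by (simp add: D'_def)
  ultimately show ?thesis unfolding smooth_on_def by blast
qed

lemma smooth_on_derivE:
  assumes "smooth_on S f"
  shows "\<exists>f'. (\<forall>t\<in>S. (f has_vector_derivative f' t) (at t within S)) \<and> smooth_on S f'"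
proof -
  obtain D where D: "D 0 = f" "\<forall>n. \<forall>t\<in>S. (D n has_vector_derivative D (Suc n) t) (at t within S)"
    using assms(1) unfolding smooth_on_def by blast
  have "smooth_on S (D 1)" unfolding smooth_on_def
    using D by (intro exI[of _ "\<lambda>n. D (Suc n)"]) auto
  then show ?thesis using D by (intro exI[of _ "D 1"]) auto
qed

lemma smooth_on_coinduct:
  assumes "P f"
    and step: "\<And>F. P F \<Longrightarrow> \<exists>F'. (\<forall>t\<in>S. (F has_vector_derivative F' t) (at t within S)) \<and> P F'"
  shows "smooth_on S f"
proof -
  define N where "N F = (SOME F'. (\<forall>t\<in>S. (F has_vector_derivative F' t) (at t within S)) \<and> P F')" for F
  have N: "(\<forall>t\<in>S. (F has_vector_derivative N F t) (at t within S)) \<and> P (N F)" if "P F" for F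
    unfolding N_def using someI_ex[OF step[OF that]] .
  define D where "D n = (N ^^ n) f" for n
  have PD: "P (D n)" for n
    by (induction n) (auto simp: D_def assms(1) N)
  have "\<forall>n. \<forall>t\<in>S. (D n has_vector_derivative D (Suc n) t) (at t within S)"
    using N[OF PD] by (simp add: D_def)
  moreover have "D 0 = f" by (simp add: D_def)
  ultimately show ?thesis unfolding smooth_on_def by blast
qed

lemma smooth_on_const: "smooth_on S (\<lambda>t. c)"
  by (rule smooth_on_coinduct[where P="\<lambda>F. \<exists>c. F = (\<lambda>t. c)"])
     (auto intro!: exI[of _ "\<lambda>t. 0"] has_vector_derivative_const)

lemma smooth_on_add:
  assumes "smooth_on S f" "smooth_on S g" shows "smooth_on S (\<lambda>t. f t + g t)"
proof -
  obtain D where D: "D 0 = f" "\<forall>n. \<forall>t\<in>S. (D n has_vector_derivative D (Suc n) t) (at t within S)"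
    using assms(1) unfolding smooth_on_def by blast
  obtain E where E: "E 0 = g" "\<forall>n. \<forall>t\<in>S. (E n has_vector_derivative E (Suc n) t) (at t within S)"
    using assms(2) unfolding smooth_on_def by blast
  show ?thesis unfolding smooth_on_def
    using D E by (intro exI[of _ "\<lambda>n t. D n t + E n t"]) (auto intro!: has_vector_derivative_add)
qed

lemma hvd_cmul:
  assumes "(f has_vector_derivative f') (at t within S)"
  shows "((\<lambda>t. c *\<^sub>R f t) has_vector_derivative c *\<^sub>R f') (at t within S)"
  using has_vector_derivative_scaleR[OF DERIV_const[of c] assms] by simp

lemma smooth_on_scaleR:
  assumes "smooth_on S f" shows "smooth_on S (\<lambda>t. c *\<^sub>R f t)"
proof -
  obtain D where D: "D 0 = f" "\<forall>n. \<forall>t\<in>S. (D n has_vector_derivative D (Suc n) t) (at t within S)"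
    using assms(1) unfolding smooth_on_def by blast
  show ?thesis unfolding smooth_on_def
  proof (intro exI[of _ "\<lambda>n t. c *\<^sub>R D n t"] conjI allI ballI)
    show "(\<lambda>t. c *\<^sub>R D 0 t) = (\<lambda>t. c *\<^sub>R f t)" using D by simp
    fix n t assume "t \<in> S"
    then show "((\<lambda>t. c *\<^sub>R D n t) has_vector_derivative c *\<^sub>R D (Suc n) t) (at t within S)"
      using D(2) by (intro hvd_cmul) auto
  qed
qed

definition sder :: "real set \<Rightarrow> (real \<Rightarrow> 'a::real_normed_vector) \<Rightarrow> real \<Rightarrow> 'a" where
  "sder S f = (SOME f'. (\<forall>t\<in>S. (f has_vector_derivative f' t) (at t within S)) \<and> smooth_on S f')"

lemma sder:
  assumes "smooth_on S f"
  shows "\<forall>t\<in>S. (f has_vector_derivative sder S f t) (at t within S)" "smooth_on S (sder S f)"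
  using someI_ex[OF smooth_on_derivE[OF assms]] unfolding sder_def by auto

definition psum :: "((real \<Rightarrow> real) \<times> (real \<Rightarrow> 'a::real_normed_vector)) list \<Rightarrow> real \<Rightarrow> 'a" where
  "psum xs = (\<lambda>t. sum_list (map (\<lambda>p. fst p t *\<^sub>R snd p t) xs))"

lemma psum_deriv:
  assumes "\<forall>p\<in>set xs. smooth_on S (fst p) \<and> smooth_on S (snd p)" "t \<in> S"
  shows "(psum xs has_vector_derivative
     psum (concat (map (\<lambda>p. [(sder S (fst p), snd p), (fst p, sder S (snd p))]) xs)) t) (at t within S)"
  using assms(1)
proof (induction xs)
  case Nil
  then show ?case by (simp add: psum_def has_vector_derivative_const)
next
  case (Cons p xs)
  have d1: "(fst p has_real_derivative sder S (fst p) t) (at t within S)"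
    using sder(1)[of S "fst p"] Cons.prems assms(2)
    by (simp add: has_real_derivative_iff_has_vector_derivative)
  have d2: "(snd p has_vector_derivative sder S (snd p) t) (at t within S)"
    using sder(1)[of S "snd p"] Cons.prems assms(2) by simp
  have "((\<lambda>t. fst p t *\<^sub>R snd p t + psum xs t) has_vector_derivative
     (fst p t *\<^sub>R sder S (snd p) t + sder S (fst p) t *\<^sub>R snd p t) +
     psum (concat (map (\<lambda>p. [(sder S (fst p), snd p), (fst p, sder S (snd p))]) xs)) t) (at t within S)"
    using Cons by (intro has_vector_derivative_add has_vector_derivative_scaleR d1 d2) auto
  then show ?case by (simp add: psum_def algebra_simps)
qed

lemma smooth_on_psum:
  assumes "\<forall>p\<in>set xs. smooth_on S (fst p) \<and> smooth_on S (snd p)"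
  shows "smooth_on S (psum xs)"
proof (rule smooth_on_coinduct[where P="\<lambda>F. \<exists>xs. F = psum xs \<and> (\<forall>p\<in>set xs. smooth_on S (fst p) \<and> smooth_on S (snd p))"])
  show "\<exists>xs'. psum xs = psum xs' \<and> (\<forall>p\<in>set xs'. smooth_on S (fst p) \<and> smooth_on S (snd p))"
    using assms by blast
next
  fix F :: "real \<Rightarrow> 'a"
  assume "\<exists>xs. F = psum xs \<and> (\<forall>p\<in>set xs. smooth_on S (fst p) \<and> smooth_on S (snd p))"
  then obtain xs where xs: "F = psum xs" "\<forall>p\<in>set xs. smooth_on S (fst p) \<and> smooth_on S (snd p)" by blast
  let ?ys = "concat (map (\<lambda>p. [(sder S (fst p), snd p), (fst p, sder S (snd p))]) xs)"
  have "\<forall>p\<in>set ?ys. smooth_on S (fst p) \<and> smooth_on S (snd p)"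
  proof -
    have "smooth_on S (sder S (fst p)) \<and> smooth_on S (sder S (snd p))" if "p \<in> set xs" for p
      using xs(2) that by (simp add: sder(2))
    then show ?thesis using xs(2) by auto
  qed
  then show "\<exists>F'. (\<forall>t\<in>S. (F has_vector_derivative F' t) (at t within S)) \<and>
          (\<exists>xs. F' = psum xs \<and> (\<forall>p\<in>set xs. smooth_on S (fst p) \<and> smooth_on S (snd p)))"
    using psum_deriv[OF xs(2)] xs(1) by blast
qed

lemma smooth_on_mult:
  fixes f :: "real \<Rightarrow> real" and g :: "real \<Rightarrow> 'a::real_normed_vector"
  assumes "smooth_on S f" "smooth_on S g"
  shows "smooth_on S (\<lambda>t. f t *\<^sub>R g t)"
proof -
  have "smooth_on S (psum [(f, g)])" using assms by (intro smooth_on_psum) auto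
  moreover have "psum [(f, g)] = (\<lambda>t. f t *\<^sub>R g t)" by (simp add: psum_def)
  ultimately show ?thesis by simp
qed

lemma smooth_on_affine_UNIV:
  assumes "smooth_on UNIV f"
  shows "smooth_on UNIV (\<lambda>t. f (m * t + q))"
proof -
  obtain D where D: "D 0 = f" "\<forall>n. \<forall>t\<in>UNIV. (D n has_vector_derivative D (Suc n) t) (at t within UNIV)"
    using assms(1) unfolding smooth_on_def by blast
  have "((\<lambda>t. m ^ n *\<^sub>R D n (m * t + q)) has_vector_derivative m ^ Suc n *\<^sub>R D (Suc n) (m * t + q)) (at t)" for n t
  proof -
    have h: "((\<lambda>t. m * t + q) has_vector_derivative m) (at t)"
      by (auto intro!: derivative_eq_intros simp: has_real_derivative_iff_has_vector_derivative[symmetric])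
    have "((D n \<circ> (\<lambda>t. m * t + q)) has_vector_derivative m *\<^sub>R D (Suc n) (m * t + q)) (at t)"
      using D(2) by (intro vector_diff_chain_at[OF h]) auto
    then have "((\<lambda>t. m ^ n *\<^sub>R (D n \<circ> (\<lambda>t. m * t + q)) t) has_vector_derivative m ^ n *\<^sub>R (m *\<^sub>R D (Suc n) (m * t + q))) (at t within UNIV)"
      by (intro hvd_cmul) (simp add: o_def)
    then show ?thesis by (simp add: o_def mult.commute)
  qed
  then show ?thesis unfolding smooth_on_def using D(1)
    by (intro exI[of _ "\<lambda>n t. m ^ n *\<^sub>R D n (m * t + q)"]) auto
qed

definition psi :: "real \<Rightarrow> real" where
  "psi x = (if 0 < x then exp (- (1 / x)) else 0)"

fun Pp :: "nat \<Rightarrow> real poly" where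
  "Pp 0 = 1"
| "Pp (Suc n) = [:0, 0, 1:] * (Pp n - pderiv (Pp n))"

definition psiD :: "nat \<Rightarrow> real \<Rightarrow> real" where
  "psiD n x = (if 0 < x then poly (Pp n) (1 / x) * exp (- (1 / x)) else 0)"

lemma poly_div_exp_lim: "((\<lambda>z::real. poly p z / exp z) \<longlongrightarrow> 0) at_top"
proof -
  have "((\<lambda>z. \<Sum>i\<le>degree p. coeff p i * (z ^ i / exp z)) \<longlongrightarrow> (\<Sum>i\<le>degree p. coeff p i * 0)) at_top"
    using tendsto_power_div_exp_0 by (intro tendsto_sum tendsto_mult tendsto_const) auto
  moreover have "(\<lambda>z. \<Sum>i\<le>degree p. coeff p i * (z ^ i / exp z)) = (\<lambda>z. poly p z / exp z)"
    by (auto simp: poly_altdef sum_divide_distrib)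
  ultimately show ?thesis by simp
qed

lemma psiD_pos_deriv:
  assumes "0 < x"
  shows "((\<lambda>x. poly P (1 / x) * exp (- (1 / x))) has_real_derivative
          poly ([:0, 0, 1:] * (P - pderiv P)) (1 / x) * exp (- (1 / x))) (at x)"
proof -
  have d0: "((\<lambda>x. 1 / x) has_real_derivative - 1 / x^2) (at x)"
    using assms by (auto intro!: derivative_eq_intros simp: power2_eq_square field_simps)
  have d1: "((\<lambda>x. poly P (1 / x)) has_real_derivative poly (pderiv P) (1 / x) * (- 1 / x^2)) (at x)"
    by (rule DERIV_chain2[OF poly_DERIV d0])
  have d2: "((\<lambda>x. exp (- (1 / x))) has_real_derivative exp (- (1 / x)) * (- (- 1 / x^2))) (at x)"
    by (rule DERIV_chain2[OF DERIV_exp DERIV_minus[OF d0]])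
  have "((\<lambda>x. poly P (1 / x) * exp (- (1 / x))) has_real_derivative
     poly P (1 / x) * (exp (- (1 / x)) * (- (- 1 / x^2))) + poly (pderiv P) (1 / x) * (- 1 / x^2) * exp (- (1 / x))) (at x)"
    using DERIV_mult[OF d1 d2] by (simp add: algebra_simps)
  moreover have "poly P (1 / x) * (exp (- (1 / x)) * (- (- 1 / x^2))) + poly (pderiv P) (1 / x) * (- 1 / x^2) * exp (- (1 / x))
     = poly ([:0, 0, 1:] * (P - pderiv P)) (1 / x) * exp (- (1 / x))"
    by (simp add: algebra_simps power2_eq_square divide_simps)
  ultimately show ?thesis by simp
qed

lemma psiD_deriv: "(psiD n has_real_derivative psiD (Suc n) x) (at x)"
proof (cases "0 < x")
  case True
  have "((\<lambda>x. poly (Pp n) (1 / x) * exp (- (1 / x))) has_real_derivative psiD (Suc n) x) (at x)"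
    using psiD_pos_deriv[OF True, of "Pp n"] True by (simp add: psiD_def)
  then show ?thesis
    by (rule has_field_derivative_transform_within_open[where S="{0<..}"]) (use True in \<open>auto simp: psiD_def\<close>)
next
  case False
  show ?thesis
  proof (cases "x < 0")
    case True
    have "((\<lambda>x. 0) has_real_derivative psiD (Suc n) x) (at x)"
      using True by (simp add: psiD_def)
    then show ?thesis
      by (rule has_field_derivative_transform_within_open[where S="{..<0}"]) (use True in \<open>auto simp: psiD_def\<close>)
  next
    case False
    with \<open>\<not> 0 < x\<close> have x0: "x = 0" by simp
    have "((\<lambda>y. (psiD n y - psiD n 0) / (y - 0)) \<longlongrightarrow> 0) (at 0)"
    proof (rule filterlim_split_at_real)
      have "\<forall>\<^sub>F y in at_left 0. 0 = (psiD n y - psiD n 0) / (y - 0)"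
        unfolding eventually_at_left_real[of "-1" 0]
        using eventually_at_left_real[of "-1" 0] by (auto elim!: eventually_mono simp: psiD_def)
      then show "((\<lambda>y. (psiD n y - psiD n 0) / (y - 0)) \<longlongrightarrow> 0) (at_left 0)"
        by (rule Lim_transform_eventually[OF tendsto_const])
    next
      have lim: "((\<lambda>z. poly ([:0, 1:] * Pp n) z / exp z) \<longlongrightarrow> 0) at_top"
        by (rule poly_div_exp_lim)
      have ev: "\<forall>\<^sub>F z in at_top. poly ([:0, 1:] * Pp n) z / exp z = (psiD n (inverse z) - psiD n 0) / (inverse z - 0)"
        using eventually_gt_at_top[of 0]
      proof eventually_elim
        case (elim z)
        then show ?case by (simp add: psiD_def exp_minus field_simps)
      qed
      show "((\<lambda>y. (psiD n y - psiD n 0) / (y - 0)) \<longlongrightarrow> 0) (at_right 0)"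
        unfolding filterlim_at_right_to_top
        by (rule Lim_transform_eventually[OF lim ev])
    qed
    then have "(psiD n has_real_derivative 0) (at 0)"
      by (simp add: has_field_derivative_iff)
    then show ?thesis using x0 by (simp add: psiD_def)
  qed
qed

lemma psiD0: "psiD 0 = psi"
  by (auto simp: psiD_def psi_def fun_eq_iff)

lemma smooth_psi: "smooth_on UNIV psi"
  unfolding smooth_on_def
  by (intro exI[of _ psiD]) (auto simp: psiD0 psiD_deriv has_real_derivative_iff_has_vector_derivative[symmetric])

lemma psi_pos: "0 < x \<Longrightarrow> 0 < psi x" and psi_zero: "x \<le> 0 \<Longrightarrow> psi x = 0"
  and psi_nonneg: "0 \<le> psi x"
  by (auto simp: psi_def)

lemma continuous_psi: "continuous_on S psi"
proof -
  have "psi differentiable at x" for x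
    using psiD_deriv[of 0 x] by (auto simp: psiD0 real_differentiable_def)
  then show ?thesis
    by (meson differentiable_imp_continuous_within continuous_at_imp_continuous_on)
qed

lemma smooth_on_continuous:
  assumes "smooth_on S f" shows "continuous_on S f"
proof -
  obtain D where D: "D 0 = f" "\<forall>n. \<forall>t\<in>S. (D n has_vector_derivative D (Suc n) t) (at t within S)"
    using assms(1) unfolding smooth_on_def by blast
  have "continuous (at t within S) f" if "t \<in> S" for t
    using D that has_vector_derivative_continuous by metis
  then show ?thesis by (simp add: continuous_on_eq_continuous_within)
qed

definition bmp :: "real \<Rightarrow> real \<Rightarrow> real \<Rightarrow> real" where
  "bmp p q s = psi (s - p) * psi (q - s)"

lemma smooth_bmp: "smooth_on UNIV (bmp p q)"
proof -
  have "smooth_on UNIV (\<lambda>s. psi (1 * s + - p) *\<^sub>R psi ((- 1) * s + q))"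
    by (intro smooth_on_mult smooth_on_affine_UNIV smooth_psi)
  moreover have "(\<lambda>s. psi (1 * s + - p) *\<^sub>R psi ((- 1) * s + q)) = bmp p q"
    by (auto simp: bmp_def fun_eq_iff)
  ultimately show ?thesis by simp
qed

lemma cont_bmp: "continuous_on S (bmp p q)"
  using smooth_on_continuous[OF smooth_bmp] continuous_on_subset by blast

lemma bmp_nonneg: "0 \<le> bmp p q s"
  by (simp add: bmp_def psi_nonneg)

lemma bmp_zero: "s \<le> p \<or> q \<le> s \<Longrightarrow> bmp p q s = 0"
  by (auto simp: bmp_def psi_zero)

lemma bmp_pos: "p < s \<Longrightarrow> s < q \<Longrightarrow> 0 < bmp p q s"
  by (simp add: bmp_def psi_pos)

definition bZ :: "real \<Rightarrow> real \<Rightarrow> real" where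
  "bZ p q = integral {p - 1..q} (bmp p q)"

definition PhiF :: "real \<Rightarrow> real \<Rightarrow> real \<Rightarrow> real" where
  "PhiF p q t = integral {p - 1..t} (bmp p q) / bZ p q"

lemma bmp_int: "bmp p q integrable_on {x..y}"
  by (rule integrable_continuous_interval[OF cont_bmp])

lemma bZ_pos:
  assumes "p < q" shows "0 < bZ p q"
proof -
  have ge: "0 \<le> bZ p q" unfolding bZ_def
    by (rule integral_nonneg[OF bmp_int]) (simp add: bmp_nonneg)
  have "bZ p q \<noteq> 0"
  proof
    assume "bZ p q = 0"
    then have "(bmp p q has_integral 0) (cbox (p - 1) q)"
      using bmp_int[of p q "p - 1" q] unfolding bZ_def
      by (metis cbox_interval has_integral_integral)
    moreover have "(p + q) / 2 \<in> cbox (p - 1) q" using assms by auto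
    ultimately have "bmp p q ((p + q) / 2) = 0"
      using assms by (intro has_integral_0_cbox_imp_0[where a="p - 1" and b=q])
         (auto simp: bmp_nonneg cont_bmp)
    moreover have "0 < bmp p q ((p + q) / 2)" using assms by (intro bmp_pos) auto
    ultimately show False by simp
  qed
  with ge show ?thesis by simp
qed

lemma int_zero_left:
  assumes "t \<le> p" shows "integral {p - 1..t} (bmp p q) = 0"
proof -
  have "integral {p - 1..t} (bmp p q) = integral {p - 1..t} (\<lambda>_. 0::real)"
    using assms by (intro integral_cong) (auto simp: bmp_zero)
  then show ?thesis by simp
qed

lemma int_zero_right:
  assumes "q \<le> x" shows "integral {x..y} (bmp p q) = 0"
proof -
  have "integral {x..y} (bmp p q) = integral {x..y} (\<lambda>_. 0::real)"
    using assms by (intro integral_cong) (auto simp: bmp_zero)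
  then show ?thesis by simp
qed

lemma PhiF_zero: "t \<le> p \<Longrightarrow> PhiF p q t = 0"
  by (simp add: PhiF_def int_zero_left)

lemma PhiF_one:
  assumes "p < q" "q \<le> t" shows "PhiF p q t = 1"
proof -
  have "integral {p - 1..q} (bmp p q) + integral {q..t} (bmp p q) = integral {p - 1..t} (bmp p q)"
    using assms by (intro Henstock_Kurzweil_Integration.integral_combine bmp_int) auto
  then have "integral {p - 1..t} (bmp p q) = bZ p q"
    using int_zero_right[of q q t p] by (simp add: bZ_def)
  then show ?thesis using bZ_pos[OF assms(1)] by (simp add: PhiF_def)
qed

lemma PhiF_nonneg: "p < q \<Longrightarrow> 0 \<le> PhiF p q t"
  unfolding PhiF_def using bZ_pos[of p q]
  by (intro divide_nonneg_pos integral_nonneg[OF bmp_int]) (auto simp: bmp_nonneg)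

lemma PhiF_le1:
  assumes "p < q" shows "PhiF p q t \<le> 1"
proof (cases "q \<le> t")
  case True then show ?thesis using PhiF_one[OF assms] by simp
next
  case False
  show ?thesis
  proof (cases "t \<le> p")
    case True then show ?thesis by (simp add: PhiF_zero)
  next
    case False
    have "integral {p - 1..t} (bmp p q) + integral {t..q} (bmp p q) = bZ p q"
      using False \<open>\<not> q \<le> t\<close> unfolding bZ_def
      by (intro Henstock_Kurzweil_Integration.integral_combine bmp_int) auto
    moreover have "0 \<le> integral {t..q} (bmp p q)"
      by (intro integral_nonneg[OF bmp_int]) (auto simp: bmp_nonneg)
    ultimately show ?thesis using bZ_pos[OF assms] by (simp add: PhiF_def)
  qed
qed

lemma PhiF_deriv:
  assumes "p < q"
  shows "(PhiF p q has_vector_derivative (1 / bZ p q) *\<^sub>R bmp p q t) (at t)"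
proof (cases "t < p")
  case True
  have "((\<lambda>_. 0::real) has_vector_derivative (1 / bZ p q) *\<^sub>R bmp p q t) (at t)"
    using True by (simp add: bmp_zero has_vector_derivative_const)
  then show ?thesis
    by (rule has_vector_derivative_transform_within_open[where S="{..<p}"])
       (use True in \<open>auto simp: PhiF_zero\<close>)
next
  case False
  have "((\<lambda>u. integral {p - 1..u} (bmp p q)) has_vector_derivative bmp p q t) (at t within {p - 1..t + 1})"
    using False by (intro integral_has_vector_derivative cont_bmp) auto
  moreover have "at t within {p - 1..t + 1} = at t"
    using False by (intro at_within_interior) auto
  ultimately have "((\<lambda>u. (1 / bZ p q) *\<^sub>R integral {p - 1..u} (bmp p q)) has_vector_derivative
      (1 / bZ p q) *\<^sub>R bmp p q t) (at t within UNIV)"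
    by (intro hvd_cmul) simp
  moreover have "(\<lambda>u. (1 / bZ p q) *\<^sub>R integral {p - 1..u} (bmp p q)) = PhiF p q"
    by (simp add: PhiF_def fun_eq_iff)
  ultimately show ?thesis by simp
qed

lemma smooth_PhiF:
  assumes "p < q" shows "smooth_on UNIV (PhiF p q)"
proof (rule smooth_on_derivI[where f'="\<lambda>t. (1 / bZ p q) *\<^sub>R bmp p q t"])
  show "smooth_on UNIV (\<lambda>t. (1 / bZ p q) *\<^sub>R bmp p q t)"
    by (rule smooth_on_scaleR[OF smooth_bmp])
  fix t show "(PhiF p q has_vector_derivative (1 / bZ p q) *\<^sub>R bmp p q t) (at t within UNIV)"
    using PhiF_deriv[OF assms] by simp
qed

definition rho :: "real \<Rightarrow> real \<Rightarrow> real \<Rightarrow> real" where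
  "rho a b t = PhiF (a + (b - a) / 8) (a + (b - a) / 4) t * PhiF (a + (b - a) / 8) (a + (b - a) / 4) (a + b - t)"

lemma rho_props:
  assumes "a < b"
  shows "smooth_on S (rho a b)" "continuous_on S (rho a b)"
    "\<And>t. 0 \<le> rho a b t" "\<And>t. rho a b t \<le> 1"
    "\<And>t. rho a b (a + b - t) = rho a b t"
    "\<And>t. t \<le> a + (b - a) / 8 \<Longrightarrow> rho a b t = 0"
    "\<And>t. t \<ge> b - (b - a) / 8 \<Longrightarrow> rho a b t = 0"
    "\<And>t. a + (b - a) / 4 \<le> t \<Longrightarrow> t \<le> b - (b - a) / 4 \<Longrightarrow> rho a b t = 1"
proof -
  define p where "p = a + (b - a) / 8"
  define q where "q = a + (b - a) / 4"
  have pq: "p < q" using assms by (simp add: p_def q_def)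
  have r: "rho a b = (\<lambda>t. PhiF p q t * PhiF p q (a + b - t))"
    by (simp add: rho_def p_def q_def fun_eq_iff)
  have "smooth_on UNIV (\<lambda>t. PhiF p q t *\<^sub>R PhiF p q ((- 1) * t + (a + b)))"
    by (intro smooth_on_mult smooth_on_affine_UNIV smooth_PhiF pq)
  then have sm: "smooth_on UNIV (rho a b)" by (simp add: r)
  then show "smooth_on S (rho a b)" by (rule smooth_on_subset) simp
  show "continuous_on S (rho a b)"
    using smooth_on_continuous[OF sm] continuous_on_subset by blast
  fix t
  show "0 \<le> rho a b t" using PhiF_nonneg[OF pq] by (simp add: r)
  show "rho a b t \<le> 1" using PhiF_nonneg[OF pq] PhiF_le1[OF pq]
    by (simp add: r mult_le_one)
  show "rho a b (a + b - t) = rho a b t" by (simp add: r mult.commute)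
  show "t \<le> a + (b - a) / 8 \<Longrightarrow> rho a b t = 0" by (simp add: r PhiF_zero p_def)
  show "t \<ge> b - (b - a) / 8 \<Longrightarrow> rho a b t = 0"
  proof -
    assume "t \<ge> b - (b - a) / 8"
    then have "a + b - t \<le> p" unfolding p_def by linarith
    then show ?thesis by (simp add: r PhiF_zero)
  qed
  show "a + (b - a) / 4 \<le> t \<Longrightarrow> t \<le> b - (b - a) / 4 \<Longrightarrow> rho a b t = 1"
  proof -
    assume "a + (b - a) / 4 \<le> t" "t \<le> b - (b - a) / 4"
    then have "q \<le> t" "q \<le> a + b - t" unfolding q_def by linarith+
    then show ?thesis using pq by (simp add: r PhiF_one)
  qed
qed

lemma orth3:
  fixes x y z w :: "real^3"
  assumes "x \<noteq> 0" "y \<noteq> 0" "z \<noteq> 0" "x \<bullet> y = 0" "x \<bullet> z = 0" "y \<bullet> z = 0"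
    "w \<bullet> x = 0" "w \<bullet> y = 0" "w \<bullet> z = 0"
  shows "w = 0"
proof -
  let ?S = "{x, y, z}"
  have po: "pairwise orthogonal ?S" using assms
    by (auto simp: pairwise_def orthogonal_def inner_commute)
  have ind: "independent ?S" using pairwise_orthogonal_independent[OF po] assms by auto
  have dist: "x \<noteq> y" "x \<noteq> z" "y \<noteq> z" using assms by auto
  have card: "card ?S = 3" using dist by auto
  have "UNIV \<subseteq> span ?S" using card_ge_dim_independent[of ?S UNIV] ind card by (simp add: dim_UNIV)
  then have "w \<in> span ?S" by auto
  then have "orthogonal w w" using orthogonal_to_span[of w ?S w] assms
    by (auto simp: orthogonal_def)
  then show ?thesis by (simp add: orthogonal_def)
qed

lemma hvd_inner:
  assumes "(f has_vector_derivative f') (at t within S)" "(g has_vector_derivative g') (at t within S)"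
  shows "((\<lambda>t. f t \<bullet> g t) has_vector_derivative (f' \<bullet> g t + f t \<bullet> g')) (at t within S)"
proof -
  have "((\<lambda>t. f t \<bullet> g t) has_derivative (\<lambda>h. f t \<bullet> (h *\<^sub>R g') + (h *\<^sub>R f') \<bullet> g t)) (at t within S)"
    using has_derivative_inner[OF assms[unfolded has_vector_derivative_def]] .
  moreover have "(\<lambda>h. f t \<bullet> (h *\<^sub>R g') + (h *\<^sub>R f') \<bullet> g t) = (\<lambda>h. h *\<^sub>R (f' \<bullet> g t + f t \<bullet> g'))"
    by (auto simp: fun_eq_iff algebra_simps)
  ultimately show ?thesis unfolding has_vector_derivative_def by simp
qed

lemma deriv_const_zero:
  fixes F :: "real \<Rightarrow> 'a::real_normed_vector"
  assumes "a < b" "t \<in> {a..b}" "(F has_vector_derivative F') (at t within {a..b})" "\<forall>s\<in>{a..b}. F s = K"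
  shows "F' = 0"
proof -
  have "(F has_vector_derivative 0) (at t within {a..b})"
    using has_vector_derivative_transform[OF assms(2), of F "\<lambda>_. K" 0] assms(4)
      has_vector_derivative_const by auto
  then show ?thesis
    using vector_derivative_unique_within_closed_interval[of a b t F F' 0] assms by auto
qed

lemma hvd_scale_const:
  assumes "(\<phi> has_real_derivative \<phi>') (at s within S)"
  shows "((\<lambda>s. \<phi> s *\<^sub>R v) has_vector_derivative \<phi>' *\<^sub>R v) (at s within S)"
  using has_vector_derivative_scaleR[OF assms has_vector_derivative_const[of v]] by simp

lemma circle_structure:
  fixes \<alpha> :: "real \<Rightarrow> real^3" and f :: "real \<Rightarrow> real"
  assumes ab: "a < b" and sa: "smooth_on {a..b} \<alpha>" and sph: "\<forall>t\<in>{a..b}. \<alpha> t \<in> sphere 0 1"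
    and sf: "smooth_on {a..b} f" and fpos: "\<forall>t\<in>{a..b}. f t > 0"
    and rs: "round_suspension eps a b (\<lambda>t. integral {a..t} (\<lambda>s. f s *\<^sub>R \<alpha> s))"
  obtains c r u v where "c > 0" "r > 0" "u \<bullet> u = 1" "v \<bullet> v = 1" "u \<bullet> v = 0"
    "\<forall>t\<in>{a..b}. f t = c"
    "\<forall>t\<in>{a..b}. \<alpha> t = cos (c / r * (t - a)) *\<^sub>R u + sin (c / r * (t - a)) *\<^sub>R v"
    "\<forall>t\<in>{a..b}. integral {a..t} (\<lambda>s. f s *\<^sub>R \<alpha> s) =
        r *\<^sub>R (sin (c / r * (t - a)) *\<^sub>R u + (1 - cos (c / r * (t - a))) *\<^sub>R v)"
proof -
  define \<beta> where "\<beta> t = integral {a..t} (\<lambda>s. f s *\<^sub>R \<alpha> s)" for t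
  have cf: "continuous_on {a..b} f" by (rule smooth_on_continuous[OF sf])
  have ca: "continuous_on {a..b} \<alpha>" by (rule smooth_on_continuous[OF sa])
  have cfa: "continuous_on {a..b} (\<lambda>s. f s *\<^sub>R \<alpha> s)" by (intro continuous_on_scaleR cf ca)
  have d\<beta>: "(\<beta> has_vector_derivative f t *\<^sub>R \<alpha> t) (at t within {a..b})" if "t \<in> {a..b}" for t
    unfolding \<beta>_def by (rule integral_has_vector_derivative[OF cfa that])
  have na: "norm (\<alpha> t) = 1" if "t \<in> {a..b}" for t using sph that by auto
  have aa: "\<alpha> t \<bullet> \<alpha> t = 1" if "t \<in> {a..b}" for t
    using na[OF that] by (metis norm_eq_sqrt_inner real_sqrt_eq_1_iff)
  obtain c where hc: "\<forall>t\<in>{a..b}. \<exists>v. (\<beta> has_vector_derivative v) (at t within {a..b}) \<and> norm v = c"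
    using rs unfolding round_suspension_def \<beta>_def[abs_def] by blast
  have fc: "f t = c" if t: "t \<in> {a..b}" for t
  proof -
    obtain v where v: "(\<beta> has_vector_derivative v) (at t within {a..b})" "norm v = c" using hc t by blast
    have "v = f t *\<^sub>R \<alpha> t"
      using vector_derivative_unique_within_closed_interval[of a b t \<beta> v "f t *\<^sub>R \<alpha> t"] ab t v d\<beta>[OF t]
      by auto
    moreover have "0 < f t" using fpos t by blast
    ultimately show ?thesis using v(2) na[OF t] by simp
  qed
  have c0: "c > 0" using fc[of a] fpos ab by auto
  obtain C where C: "round_circle C" "\<beta> ` {a..b} \<subseteq> C"
    using rs unfolding round_suspension_def \<beta>_def[abs_def] by blast
  obtain p r n where prn: "r > 0" "n \<noteq> 0" "C = {x. dist x p = r \<and> (x - p) \<bullet> n = 0}"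
    using C(1) unfolding round_circle_def by blast
  define w where "w t = \<beta> t - p" for t
  have ww: "w t \<bullet> w t = r\<^sup>2" if "t \<in> {a..b}" for t
  proof -
    have "\<beta> t \<in> C" using C(2) that by blast
    then have "dist (\<beta> t) p = r" using prn(3) by auto
    then have "norm (w t) = r" by (simp add: w_def dist_norm)
    then show ?thesis by (metis power2_norm_eq_inner)
  qed
  have wn: "w t \<bullet> n = 0" if "t \<in> {a..b}" for t
  proof -
    have "\<beta> t \<in> C" using C(2) that by blast
    then show ?thesis using prn(3) by (auto simp: w_def)
  qed
  have dw: "(w has_vector_derivative c *\<^sub>R \<alpha> t) (at t within {a..b})" if "t \<in> {a..b}" for t
  proof -
    have "((\<lambda>t. \<beta> t - p) has_vector_derivative f t *\<^sub>R \<alpha> t - 0) (at t within {a..b})"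
      by (intro has_vector_derivative_diff d\<beta> that has_vector_derivative_const)
    then show ?thesis using fc[OF that] by (simp add: w_def[abs_def])
  qed
  obtain D where D: "D 0 = \<alpha>" "\<forall>n. \<forall>t\<in>{a..b}. (D n has_vector_derivative D (Suc n) t) (at t within {a..b})"
    using sa unfolding smooth_on_def by blast
  define \<alpha>1 where "\<alpha>1 = D 1"
  have d\<alpha>: "(\<alpha> has_vector_derivative \<alpha>1 t) (at t within {a..b})" if "t \<in> {a..b}" for t
    using D that by (metis One_nat_def \<alpha>1_def)
  have F1: "w t \<bullet> \<alpha> t = 0" if t: "t \<in> {a..b}" for t
  proof -
    have "((\<lambda>s. w s \<bullet> w s) has_vector_derivative (c *\<^sub>R \<alpha> t) \<bullet> w t + w t \<bullet> (c *\<^sub>R \<alpha> t)) (at t within {a..b})"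
      by (intro hvd_inner dw t)
    then have "(c *\<^sub>R \<alpha> t) \<bullet> w t + w t \<bullet> (c *\<^sub>R \<alpha> t) = 0"
      by (rule deriv_const_zero[OF ab t]) (use ww in auto)
    then show ?thesis using c0 by (simp add: inner_commute)
  qed
  have F2: "\<alpha> t \<bullet> n = 0" if t: "t \<in> {a..b}" for t
  proof -
    have "((\<lambda>s. w s \<bullet> n) has_vector_derivative (c *\<^sub>R \<alpha> t) \<bullet> n + w t \<bullet> 0) (at t within {a..b})"
      by (intro hvd_inner dw t has_vector_derivative_const)
    then have "(c *\<^sub>R \<alpha> t) \<bullet> n + w t \<bullet> 0 = 0"
      by (rule deriv_const_zero[OF ab t]) (use wn in auto)
    then show ?thesis using c0 by simp
  qed
  have F3: "\<alpha>1 t \<bullet> n = 0" if t: "t \<in> {a..b}" for t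
  proof -
    have "((\<lambda>s. \<alpha> s \<bullet> n) has_vector_derivative \<alpha>1 t \<bullet> n + \<alpha> t \<bullet> 0) (at t within {a..b})"
      by (intro hvd_inner d\<alpha> t has_vector_derivative_const)
    then have "\<alpha>1 t \<bullet> n + \<alpha> t \<bullet> 0 = 0"
      by (rule deriv_const_zero[OF ab t]) (use F2 in auto)
    then show ?thesis by simp
  qed
  have F4: "\<alpha> t \<bullet> \<alpha>1 t = 0" if t: "t \<in> {a..b}" for t
  proof -
    have "((\<lambda>s. \<alpha> s \<bullet> \<alpha> s) has_vector_derivative \<alpha>1 t \<bullet> \<alpha> t + \<alpha> t \<bullet> \<alpha>1 t) (at t within {a..b})"
      by (intro hvd_inner d\<alpha> t)
    then have "\<alpha>1 t \<bullet> \<alpha> t + \<alpha> t \<bullet> \<alpha>1 t = 0"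
      by (rule deriv_const_zero[OF ab t]) (use aa in auto)
    then show ?thesis by (simp add: inner_commute)
  qed
  have F5: "w t \<bullet> \<alpha>1 t = - c" if t: "t \<in> {a..b}" for t
  proof -
    have "((\<lambda>s. w s \<bullet> \<alpha> s) has_vector_derivative (c *\<^sub>R \<alpha> t) \<bullet> \<alpha> t + w t \<bullet> \<alpha>1 t) (at t within {a..b})"
      by (intro hvd_inner d\<alpha> dw t)
    then have "(c *\<^sub>R \<alpha> t) \<bullet> \<alpha> t + w t \<bullet> \<alpha>1 t = 0"
      by (rule deriv_const_zero[OF ab t]) (use F1 in auto)
    then show ?thesis using aa[OF t] by simp
  qed
  have A1: "\<alpha>1 t = - (c / r\<^sup>2) *\<^sub>R w t" if t: "t \<in> {a..b}" for t
  proof -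
    have wnz: "w t \<noteq> 0" using ww[OF t] prn(1) by auto
    have anz: "\<alpha> t \<noteq> 0" using na[OF t] by auto
    have "\<alpha>1 t + (c / r\<^sup>2) *\<^sub>R w t = 0"
    proof (rule orth3[OF wnz anz prn(2)])
      show "w t \<bullet> \<alpha> t = 0" by (rule F1[OF t])
      show "w t \<bullet> n = 0" by (rule wn[OF t])
      show "\<alpha> t \<bullet> n = 0" by (rule F2[OF t])
      show "(\<alpha>1 t + (c / r\<^sup>2) *\<^sub>R w t) \<bullet> w t = 0"
      proof -
        have "(\<alpha>1 t + (c / r\<^sup>2) *\<^sub>R w t) \<bullet> w t = \<alpha>1 t \<bullet> w t + (c / r\<^sup>2) * (w t \<bullet> w t)"
          by (simp add: inner_add_left)
        moreover have "\<alpha>1 t \<bullet> w t = w t \<bullet> \<alpha>1 t" by (rule inner_commute)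
        ultimately show ?thesis using F5[OF t] ww[OF t] prn(1) by simp
      qed
      show "(\<alpha>1 t + (c / r\<^sup>2) *\<^sub>R w t) \<bullet> \<alpha> t = 0"
        using F4[OF t] F1[OF t] by (simp add: inner_add_left inner_commute inner_add_right)
      show "(\<alpha>1 t + (c / r\<^sup>2) *\<^sub>R w t) \<bullet> n = 0"
        using F3[OF t] wn[OF t] by (simp add: inner_add_left)
    qed
    then show ?thesis by (simp add: eq_neg_iff_add_eq_0)
  qed
  define \<omega> where "\<omega> = c / r"
  define q where "q t = (1 / r) *\<^sub>R w t" for t
  have dq: "(q has_vector_derivative \<omega> *\<^sub>R \<alpha> t) (at t within {a..b})" if t: "t \<in> {a..b}" for t
  proof -
    have "((\<lambda>t. (1 / r) *\<^sub>R w t) has_vector_derivative (1 / r) *\<^sub>R (c *\<^sub>R \<alpha> t)) (at t within {a..b})"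
      by (intro hvd_cmul dw t)
    then show ?thesis by (simp add: q_def[abs_def] \<omega>_def)
  qed
  have d\<alpha>': "(\<alpha> has_vector_derivative (- \<omega>) *\<^sub>R q t) (at t within {a..b})" if t: "t \<in> {a..b}" for t
  proof -
    have "\<alpha>1 t = (- \<omega>) *\<^sub>R q t" using A1[OF t] prn(1) by (simp add: q_def \<omega>_def power2_eq_square)
    then show ?thesis using d\<alpha>[OF t] by simp
  qed
  define A where "A s = cos (\<omega> * (s - a)) *\<^sub>R \<alpha> a - sin (\<omega> * (s - a)) *\<^sub>R q a" for s
  define Q where "Q s = sin (\<omega> * (s - a)) *\<^sub>R \<alpha> a + cos (\<omega> * (s - a)) *\<^sub>R q a" for s
  have dcos: "((\<lambda>s. cos (\<omega> * (s - a))) has_real_derivative - sin (\<omega> * (s - a)) * \<omega>) (at s within X)" for s X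
    by (auto intro!: derivative_eq_intros)
  have dsin: "((\<lambda>s. sin (\<omega> * (s - a))) has_real_derivative cos (\<omega> * (s - a)) * \<omega>) (at s within X)" for s X
    by (auto intro!: derivative_eq_intros)
  have dA: "(A has_vector_derivative (- \<omega>) *\<^sub>R Q s) (at s within {a..b})" for s
  proof -
    have "(A has_vector_derivative (- sin (\<omega> * (s - a)) * \<omega>) *\<^sub>R \<alpha> a - (cos (\<omega> * (s - a)) * \<omega>) *\<^sub>R q a) (at s within {a..b})"
      unfolding A_def by (intro has_vector_derivative_diff hvd_scale_const dcos dsin)
    moreover have "(- sin (\<omega> * (s - a)) * \<omega>) *\<^sub>R \<alpha> a - (cos (\<omega> * (s - a)) * \<omega>) *\<^sub>R q a = (- \<omega>) *\<^sub>R Q s"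
      by (simp add: Q_def algebra_simps)
    ultimately show ?thesis by simp
  qed
  have dQ: "(Q has_vector_derivative \<omega> *\<^sub>R A s) (at s within {a..b})" for s
  proof -
    have "(Q has_vector_derivative (cos (\<omega> * (s - a)) * \<omega>) *\<^sub>R \<alpha> a + (- sin (\<omega> * (s - a)) * \<omega>) *\<^sub>R q a) (at s within {a..b})"
      unfolding Q_def by (intro has_vector_derivative_add hvd_scale_const dcos dsin)
    moreover have "(cos (\<omega> * (s - a)) * \<omega>) *\<^sub>R \<alpha> a + (- sin (\<omega> * (s - a)) * \<omega>) *\<^sub>R q a = \<omega> *\<^sub>R A s"
      by (simp add: A_def algebra_simps)
    ultimately show ?thesis by simp
  qed
  have dX: "((\<lambda>s. \<alpha> s - A s) has_vector_derivative (- \<omega>) *\<^sub>R (q s - Q s)) (at s within {a..b})"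
    if s: "s \<in> {a..b}" for s
    using has_vector_derivative_diff[OF d\<alpha>'[OF s] dA[of s]] by (simp add: scaleR_diff_right)
  have dY: "((\<lambda>s. q s - Q s) has_vector_derivative \<omega> *\<^sub>R (\<alpha> s - A s)) (at s within {a..b})"
    if s: "s \<in> {a..b}" for s
    using has_vector_derivative_diff[OF dq[OF s] dQ[of s]] by (simp add: scaleR_diff_right)
  define E where "E s = (\<alpha> s - A s) \<bullet> (\<alpha> s - A s) + (q s - Q s) \<bullet> (q s - Q s)" for s
  have dE: "(E has_real_derivative 0) (at s within {a..b})" if s: "s \<in> {a..b}" for s
  proof -
    have "(E has_vector_derivative
        (((- \<omega>) *\<^sub>R (q s - Q s)) \<bullet> (\<alpha> s - A s) + (\<alpha> s - A s) \<bullet> ((- \<omega>) *\<^sub>R (q s - Q s))) +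
        ((\<omega> *\<^sub>R (\<alpha> s - A s)) \<bullet> (q s - Q s) + (q s - Q s) \<bullet> (\<omega> *\<^sub>R (\<alpha> s - A s)))) (at s within {a..b})"
      unfolding E_def[abs_def] by (intro has_vector_derivative_add hvd_inner dX dY s)
    moreover have "(((- \<omega>) *\<^sub>R (q s - Q s)) \<bullet> (\<alpha> s - A s) + (\<alpha> s - A s) \<bullet> ((- \<omega>) *\<^sub>R (q s - Q s))) +
        ((\<omega> *\<^sub>R (\<alpha> s - A s)) \<bullet> (q s - Q s) + (q s - Q s) \<bullet> (\<omega> *\<^sub>R (\<alpha> s - A s))) = 0"
      by (simp add: inner_commute)
    ultimately show ?thesis by (simp add: has_real_derivative_iff_has_vector_derivative)
  qed
  obtain K where K: "\<forall>s\<in>{a..b}. E s = K"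
    using has_field_derivative_zero_constant[of "{a..b}" E] dE by auto
  have Ea: "E a = 0" by (simp add: E_def A_def Q_def)
  have E0: "E t = 0" if "t \<in> {a..b}" for t using K that Ea ab by auto
  have eqs: "\<alpha> t = A t \<and> q t = Q t" if t: "t \<in> {a..b}" for t
  proof -
    have "0 \<le> (\<alpha> t - A t) \<bullet> (\<alpha> t - A t)" "0 \<le> (q t - Q t) \<bullet> (q t - Q t)" by simp_all
    then have "(\<alpha> t - A t) \<bullet> (\<alpha> t - A t) = 0" "(q t - Q t) \<bullet> (q t - Q t) = 0"
      using E0[OF t] unfolding E_def by linarith+
    then show ?thesis by simp
  qed
  define u where "u = \<alpha> a"
  define v where "v = - q a"
  have a_in: "a \<in> {a..b}" using ab by simp
  have uu: "u \<bullet> u = 1" unfolding u_def by (rule aa[OF a_in])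
  have vv: "v \<bullet> v = 1" using ww[OF a_in] prn(1) by (simp add: v_def q_def power2_eq_square)
  have uv: "u \<bullet> v = 0" using F1[OF a_in] by (simp add: u_def v_def q_def inner_commute)
  have \<alpha>t: "\<alpha> t = cos (c / r * (t - a)) *\<^sub>R u + sin (c / r * (t - a)) *\<^sub>R v" if t: "t \<in> {a..b}" for t
    using eqs[OF t] by (simp add: A_def u_def v_def \<omega>_def)
  have wq: "w t = r *\<^sub>R q t" for t using prn(1) by (simp add: q_def)
  have \<beta>a: "\<beta> a = 0" by (simp add: \<beta>_def)
  have pv: "p = r *\<^sub>R v"
  proof -
    have "- p = r *\<^sub>R q a" using \<beta>a wq[of a] by (simp add: w_def)
    then have "p = - (r *\<^sub>R q a)" by (metis minus_minus)
    then show ?thesis by (simp add: v_def)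
  qed
  have \<beta>t: "\<beta> t = r *\<^sub>R (sin (c / r * (t - a)) *\<^sub>R u + (1 - cos (c / r * (t - a))) *\<^sub>R v)"
    if t: "t \<in> {a..b}" for t
  proof -
    have "\<beta> t = w t + p" by (simp add: w_def)
    also have "\<dots> = r *\<^sub>R Q t + r *\<^sub>R v" using wq[of t] eqs[OF t] pv by simp
    finally show ?thesis by (simp add: Q_def u_def v_def \<omega>_def algebra_simps)
  qed
  show ?thesis
    using that[of c r u v] c0 prn(1) uu vv uv fc \<alpha>t \<beta>t unfolding \<beta>_def by blast
qed

lemma ortho_inner:
  fixes u v :: "'a::real_inner"
  assumes "u \<bullet> u = 1" "v \<bullet> v = 1" "u \<bullet> v = 0"
  shows "(p1 *\<^sub>R u + p2 *\<^sub>R v) \<bullet> (q1 *\<^sub>R u + q2 *\<^sub>R v) = p1 * q1 + p2 * q2"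
proof -
  have "v \<bullet> u = 0" using assms(3) by (simp add: inner_commute)
  then show ?thesis using assms by (simp add: inner_add_left inner_add_right)
qed

lemma beta_half:
  fixes u v :: "'a::real_vector"
  shows "r *\<^sub>R (sin (2 * s) *\<^sub>R u + (1 - cos (2 * s)) *\<^sub>R v) = (2 * r * sin s) *\<^sub>R (cos s *\<^sub>R u + sin s *\<^sub>R v)"
proof -
  have h1: "sin (2 * s) = 2 * sin s * cos s" by (simp add: sin_double)
  have h2: "1 - cos (2 * s) = 2 * sin s * sin s" by (simp add: cos_double_sin power2_eq_square)
  show ?thesis unfolding h1 h2 scaleR_add_right scaleR_scaleR by (simp add: ac_simps)
qed

lemma susp_bound:
  fixes u v :: "real^3" and \<beta> :: "real \<Rightarrow> real^3"
  assumes ab: "a < b" and r0: "r > 0" and w0: "\<omega> > 0"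
    and uu: "u \<bullet> u = 1" and vv: "v \<bullet> v = 1" and uv: "u \<bullet> v = 0"
    and bt: "\<forall>t\<in>{a..b}. \<beta> t = r *\<^sub>R (sin (\<omega> * (t - a)) *\<^sub>R u + (1 - cos (\<omega> * (t - a))) *\<^sub>R v)"
    and su: "suspension eps a b \<beta>"
  shows "\<omega> * (b - a) / 2 < pi / 2" "eps > 0"
    "r * (sin (\<omega> * (b - a) / 2))\<^sup>2 \<le> eps * cos (\<omega> * (b - a) / 2)"
proof -
  define T where "T = \<omega> * (b - a) / 2"
  have T0: "T > 0" using ab w0 by (simp add: T_def)
  have inj: "inj_on \<beta> {a..b}" using su by (simp add: suspension_def)
  obtain Tr where Tr: "isosceles_triangle (\<beta> a) (\<beta> b) eps Tr" "\<beta> ` {a..b} \<subseteq> Tr"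
    using su by (auto simp: suspension_def)
  have \<beta>a: "\<beta> a = 0" using bt ab by simp
  have \<beta>s: "\<beta> (a + 2 * s / \<omega>) = (2 * r * sin s) *\<^sub>R (cos s *\<^sub>R u + sin s *\<^sub>R v)"
    if "0 \<le> s" "s \<le> T" for s
  proof -
    have "a + 2 * s / \<omega> \<in> {a..b}" using that w0 ab by (auto simp: T_def field_simps)
    then have "\<beta> (a + 2 * s / \<omega>) = r *\<^sub>R (sin (2 * s) *\<^sub>R u + (1 - cos (2 * s)) *\<^sub>R v)"
      using bt w0 by simp
    then show ?thesis by (simp add: beta_half)
  qed
  have Tpi: "T < pi"
  proof (rule ccontr)
    assume "\<not> T < pi"
    then have "pi \<le> T" by simp
    then have "\<beta> (a + 2 * pi / \<omega>) = 0" using \<beta>s[of pi] by simp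
    moreover have "a + 2 * pi / \<omega> \<in> {a..b}" "a \<in> {a..b}"
      using \<open>pi \<le> T\<close> w0 ab pi_gt_zero by (auto simp: T_def field_simps)
    moreover have "a + 2 * pi / \<omega> \<noteq> a" using w0 pi_gt_zero by simp
    ultimately show False using inj \<beta>a unfolding inj_on_def by metis
  qed
  have sT: "sin T > 0" using T0 Tpi by (simp add: sin_gt_zero)
  define e where "e = cos T *\<^sub>R u + sin T *\<^sub>R v"
  define \<nu> where "\<nu> = sin T *\<^sub>R u + (- cos T) *\<^sub>R v"
  have ee: "e \<bullet> e = 1" unfolding e_def ortho_inner[OF uu vv uv] by (simp add: power2_eq_square[symmetric])
  have nn: "\<nu> \<bullet> \<nu> = 1" unfolding \<nu>_def ortho_inner[OF uu vv uv] by (simp add: power2_eq_square[symmetric])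
  have en: "e \<bullet> \<nu> = 0" unfolding e_def \<nu>_def ortho_inner[OF uu vv uv] by simp
  have ne: "\<nu> \<bullet> e = 0" using en by (simp add: inner_commute)
  define B where "B = \<beta> b"
  have Be: "B = (2 * r * sin T) *\<^sub>R e"
    using \<beta>s[of T] T0 w0 by (simp add: B_def e_def T_def)
  obtain x where x: "(x - midpoint (\<beta> a) (\<beta> b)) \<bullet> (\<beta> b - \<beta> a) = 0"
    "norm (x - midpoint (\<beta> a) (\<beta> b)) = eps" "Tr = convex hull {\<beta> a, \<beta> b, x}"
    using Tr(1) unfolding isosceles_triangle_def by blast
  have mid: "midpoint (\<beta> a) (\<beta> b) = (r * sin T) *\<^sub>R e"
    using \<beta>a Be by (simp add: midpoint_def B_def)
  define X where "X = (x - midpoint (\<beta> a) (\<beta> b)) \<bullet> \<nu>"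
  have eps0: "0 \<le> eps" using x(2) by auto
  have Xeps: "X \<le> eps"
  proof -
    have "\<bar>X\<bar> \<le> norm (x - midpoint (\<beta> a) (\<beta> b)) * norm \<nu>"
      unfolding X_def by (rule Cauchy_Schwarz_ineq2)
    moreover have "norm \<nu> = 1" using nn by (simp add: norm_eq_sqrt_inner)
    ultimately show ?thesis using x(2) by simp
  qed
  have xe: "x \<bullet> e = r * sin T"
  proof -
    have "(x - midpoint (\<beta> a) (\<beta> b)) \<bullet> ((2 * r * sin T) *\<^sub>R e) = 0"
      using x(1) \<beta>a Be by (simp add: B_def)
    then have "(x - midpoint (\<beta> a) (\<beta> b)) \<bullet> e = 0" using r0 sT by simp
    then show ?thesis using mid ee by (simp add: inner_diff_left)
  qed
  have xn: "x \<bullet> \<nu> = X"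
    unfolding X_def using mid ne en by (simp add: inner_diff_left)
  have key: "r * sin T * sin \<sigma> \<le> eps * cos \<sigma>" if \<sigma>: "0 < \<sigma>" "\<sigma> < T" for \<sigma>
  proof -
    define s where "s = T - \<sigma>"
    have s: "0 < s" "s < T" using \<sigma> by (auto simp: s_def)
    have ss: "sin s > 0" using s Tpi by (simp add: sin_gt_zero)
    have s\<sigma>: "sin \<sigma> > 0" using \<sigma> Tpi by (simp add: sin_gt_zero)
    define t where "t = a + 2 * s / \<omega>"
    have t: "t \<in> {a..b}" using s w0 ab by (auto simp: t_def T_def field_simps)
    have "\<beta> t \<in> convex hull {\<beta> a, \<beta> b, x}" using Tr(2) x(3) t by blast
    then obtain l0 l1 l2 where l: "0 \<le> l0" "0 \<le> l1" "0 \<le> l2" "l0 + l1 + l2 = 1"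
      "\<beta> t = l0 *\<^sub>R \<beta> a + l1 *\<^sub>R \<beta> b + l2 *\<^sub>R x"
      unfolding convex_hull_3 by blast
    have bt2: "\<beta> t = l1 *\<^sub>R B + l2 *\<^sub>R x" using l(5) \<beta>a by (simp add: B_def)
    have bte: "\<beta> t \<bullet> e = 2 * r * sin s * cos \<sigma>"
    proof -
      have "\<beta> t \<bullet> e = (2 * r * sin s) * ((cos s *\<^sub>R u + sin s *\<^sub>R v) \<bullet> e)"
        using \<beta>s[of s] s by (simp add: t_def)
      also have "(cos s *\<^sub>R u + sin s *\<^sub>R v) \<bullet> e = cos s * cos T + sin s * sin T"
        unfolding e_def by (rule ortho_inner[OF uu vv uv])
      also have "\<dots> = cos (T - s)" by (simp add: cos_diff mult.commute)
      also have "T - s = \<sigma>" by (simp add: s_def)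
      finally show ?thesis by simp
    qed
    have btn: "\<beta> t \<bullet> \<nu> = 2 * r * sin s * sin \<sigma>"
    proof -
      have "\<beta> t \<bullet> \<nu> = (2 * r * sin s) * ((cos s *\<^sub>R u + sin s *\<^sub>R v) \<bullet> \<nu>)"
        using \<beta>s[of s] s by (simp add: t_def)
      also have "(cos s *\<^sub>R u + sin s *\<^sub>R v) \<bullet> \<nu> = cos s * sin T + sin s * (- cos T)"
        unfolding \<nu>_def by (rule ortho_inner[OF uu vv uv])
      also have "\<dots> = sin (T - s)" by (simp add: sin_diff mult.commute)
      also have "T - s = \<sigma>" by (simp add: s_def)
      finally show ?thesis by simp
    qed
    have E1: "2 * r * sin s * cos \<sigma> = l1 * (2 * r * sin T) + l2 * (r * sin T)"
      using bte bt2 Be xe ee by (simp add: inner_add_left)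
    have E2: "2 * r * sin s * sin \<sigma> = l2 * X"
      using btn bt2 Be xn en by (simp add: inner_add_left)
    have pos: "0 < l2 * X" using E2 r0 ss s\<sigma> by (metis mult_pos_pos zero_less_numeral)
    have X0: "X > 0" using pos l(3) by (metis mult_nonneg_nonpos not_le)
    have I1: "l2 * (r * sin T) \<le> 2 * r * sin s * cos \<sigma>"
      using E1 l(2) r0 sT by (simp add: mult_nonneg_nonneg)
    have I2: "(l2 * X) * (r * sin T) \<le> (2 * r * sin s * cos \<sigma>) * X"
      using mult_right_mono[OF I1 less_imp_le[OF X0]] by (simp add: algebra_simps)
    have e1: "(l2 * X) * (r * sin T) = (2 * r * sin s) * (sin \<sigma> * (r * sin T))"
      unfolding E2[symmetric] by (simp add: ac_simps)
    have e2: "(2 * r * sin s * cos \<sigma>) * X = (2 * r * sin s) * (cos \<sigma> * X)"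
      by (simp add: ac_simps)
    have I3: "(2 * r * sin s) * (sin \<sigma> * (r * sin T)) \<le> (2 * r * sin s) * (cos \<sigma> * X)"
      using I2 unfolding e1 e2 .
    have I4: "r * sin T * sin \<sigma> \<le> cos \<sigma> * X"
      using I3 r0 ss by (simp add: mult_le_cancel_left_pos algebra_simps)
    have c\<sigma>: "cos \<sigma> > 0"
    proof -
      have "0 < r * sin T * sin \<sigma>" using r0 sT s\<sigma> by simp
      then have "0 < cos \<sigma> * X" using I4 by linarith
      then show ?thesis using X0 by (simp add: zero_less_mult_iff)
    qed
    have "cos \<sigma> * X \<le> cos \<sigma> * eps" using c\<sigma> Xeps by simp
    then show ?thesis using I4 by (simp add: mult.commute)
  qed
  have lim: "((\<lambda>\<sigma>. eps * cos \<sigma> - r * sin T * sin \<sigma>) \<longlongrightarrow> eps * cos T - r * sin T * sin T) (at_left T)"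
    by (intro tendsto_intros)
  have ev: "\<forall>\<^sub>F \<sigma> in at_left T. 0 \<le> eps * cos \<sigma> - r * sin T * sin \<sigma>"
    using eventually_at_left_real[OF T0] by eventually_elim (use key in auto)
  have bound: "0 \<le> eps * cos T - r * sin T * sin T"
    by (rule tendsto_lowerbound[OF lim ev]) simp
  then show "r * (sin (\<omega> * (b - a) / 2))\<^sup>2 \<le> eps * cos (\<omega> * (b - a) / 2)"
    by (simp add: T_def power2_eq_square algebra_simps)
  have pos: "0 < eps * cos T" using bound r0 sT
    by (metis diff_ge_0_iff_ge less_le_trans mult_pos_pos)
  then show "eps > 0" using eps0 by (metis less_eq_real_def mult_eq_0_iff)
  have "cos T > 0" using pos eps0 by (simp add: zero_less_mult_iff)
  show "\<omega> * (b - a) / 2 < pi / 2"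
  proof (rule ccontr)
    assume "\<not> \<omega> * (b - a) / 2 < pi / 2"
    then have "pi / 2 \<le> T" by (simp add: T_def)
    then have "cos (pi - T) \<ge> 0" using Tpi by (intro cos_ge_zero) auto
    then have "cos T \<le> 0" by simp
    then show False using \<open>cos T > 0\<close> by simp
  qed
qed

lemma int_scaleR_left:
  fixes f :: "real \<Rightarrow> real" and c :: "'a::real_normed_vector"
  assumes "f integrable_on S"
  shows "integral S (\<lambda>x. f x *\<^sub>R c) = integral S f *\<^sub>R c"
  by (rule integral_unique[OF has_integral_scaleR_left[OF integrable_integral[OF assms]]])

lemma integrable_scaleR_left':
  fixes f :: "real \<Rightarrow> real" and c :: "'a::real_normed_vector"
  assumes "f integrable_on S"
  shows "(\<lambda>x. f x *\<^sub>R c) integrable_on S"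
  using has_integral_scaleR_left[OF integrable_integral[OF assms]] by (auto simp: integrable_on_def)

lemma int_decomp:
  fixes \<alpha> :: "real \<Rightarrow> 'a::real_normed_vector"
  assumes "\<forall>s\<in>{x..y}. \<alpha> s = C s *\<^sub>R e + S s *\<^sub>R \<nu>"
    "continuous_on {x..y} h" "continuous_on {x..y} C" "continuous_on {x..y} S"
  shows "integral {x..y} (\<lambda>s. h s *\<^sub>R \<alpha> s) =
    integral {x..y} (\<lambda>s. h s * C s) *\<^sub>R e + integral {x..y} (\<lambda>s. h s * S s) *\<^sub>R \<nu>"
proof -
  have i1: "(\<lambda>s. h s * C s) integrable_on {x..y}"
    by (intro integrable_continuous_interval continuous_intros assms)
  have i2: "(\<lambda>s. h s * S s) integrable_on {x..y}"
    by (intro integrable_continuous_interval continuous_intros assms)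
  have "integral {x..y} (\<lambda>s. h s *\<^sub>R \<alpha> s) = integral {x..y} (\<lambda>s. (h s * C s) *\<^sub>R e + (h s * S s) *\<^sub>R \<nu>)"
    using assms(1) by (intro integral_cong) (simp add: scaleR_add_right)
  also have "\<dots> = integral {x..y} (\<lambda>s. (h s * C s) *\<^sub>R e) + integral {x..y} (\<lambda>s. (h s * S s) *\<^sub>R \<nu>)"
    by (intro integral_add integrable_scaleR_left' i1 i2)
  also have "\<dots> = integral {x..y} (\<lambda>s. h s * C s) *\<^sub>R e + integral {x..y} (\<lambda>s. h s * S s) *\<^sub>R \<nu>"
    by (simp add: int_scaleR_left[OF i1] int_scaleR_left[OF i2])
  finally show ?thesis .
qed

lemma int_cos:
  fixes \<omega> a T x y :: real
  assumes "\<omega> \<noteq> 0" "x \<le> y"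
  shows "integral {x..y} (\<lambda>s. cos (\<omega> * (s - a) - T)) = (sin (\<omega> * (y - a) - T) - sin (\<omega> * (x - a) - T)) / \<omega>"
proof -
  have "((\<lambda>s. cos (\<omega> * (s - a) - T)) has_integral
     (\<lambda>s. sin (\<omega> * (s - a) - T) / \<omega>) y - (\<lambda>s. sin (\<omega> * (s - a) - T) / \<omega>) x) {x..y}"
  proof (rule fundamental_theorem_of_calculus[OF assms(2)])
    fix s
    have "((\<lambda>s. sin (\<omega> * (s - a) - T) / \<omega>) has_real_derivative cos (\<omega> * (s - a) - T)) (at s within {x..y})"
      using assms(1) by (auto intro!: derivative_eq_intros)
    then show "((\<lambda>s. sin (\<omega> * (s - a) - T) / \<omega>) has_vector_derivative cos (\<omega> * (s - a) - T)) (at s within {x..y})"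
      by (simp add: has_real_derivative_iff_has_vector_derivative)
  qed
  then show ?thesis by (simp add: integral_unique diff_divide_distrib)
qed

lemma int_reflect:
  fixes F :: "real \<Rightarrow> real"
  shows "integral {a..b} (\<lambda>s. F (a + b - s)) = integral {a..b} F"
proof -
  have 1: "integral {-b..-a} (\<lambda>x. F (-x)) = integral {a..b} F" by (rule Henstock_Kurzweil_Integration.integral_reflect_real)
  have 2: "integral (cbox (-b - (-(a + b))) (-a - (-(a + b)))) (\<lambda>x. (\<lambda>x. F (-x)) (x + (-(a + b))))
      = integral (cbox (-b) (-a)) (\<lambda>x. F (-x))"
    by (rule integral_shift_cbox)
  have 3: "(\<lambda>x. (\<lambda>x. F (-x)) (x + (-(a + b)))) = (\<lambda>s. F (a + b - s))"
    by (auto simp: fun_eq_iff algebra_simps)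
  show ?thesis using 1 2 unfolding 3 by simp
qed

lemma construction:
  fixes \<alpha> :: "real \<Rightarrow> real^3" and u v :: "real^3"
  assumes ab: "a < b" and c0: "c > 0" and r0: "r > 0"
    and uu: "u \<bullet> u = 1" and vv: "v \<bullet> v = 1" and uv: "u \<bullet> v = 0"
    and sa: "smooth_on {a..b} \<alpha>"
    and \<alpha>t: "\<forall>t\<in>{a..b}. \<alpha> t = cos (c / r * (t - a)) *\<^sub>R u + sin (c / r * (t - a)) *\<^sub>R v"
    and Tlt: "c / r * (b - a) / 2 < pi / 2" and eps0: "eps > 0"
    and bnd: "r * (sin (c / r * (b - a) / 2))\<^sup>2 \<le> eps * cos (c / r * (b - a) / 2)"
    and k: "1/2 \<le> k" "k \<le> 3/2"
  shows "\<exists>g. smooth_on {a..b} g \<and> (\<forall>t\<in>{a..b}. g t > 0) \<and>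
     (\<exists>\<delta>>0. \<forall>t\<in>{a..b}. (t < a + \<delta> \<or> t > b - \<delta>) \<longrightarrow> g t = c) \<and>
     suspension (k * eps) a b (\<lambda>t. integral {a..t} (\<lambda>s. g s *\<^sub>R \<alpha> s)) \<and>
     integral {a..b} (\<lambda>s. g s *\<^sub>R \<alpha> s) =
       k *\<^sub>R (r *\<^sub>R (sin (c / r * (b - a)) *\<^sub>R u + (1 - cos (c / r * (b - a))) *\<^sub>R v))"
proof -
  define \<omega> where "\<omega> = c / r"
  define T where "T = \<omega> * (b - a) / 2"
  define th where "th s = \<omega> * (s - a)" for s
  have w0: "\<omega> > 0" using c0 r0 by (simp add: \<omega>_def)
  have T0: "T > 0" using w0 ab by (simp add: T_def)
  have Tpi2: "T < pi / 2" using Tlt by (simp add: T_def \<omega>_def)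
  have sT: "sin T > 0" using T0 Tpi2 by (intro sin_gt_zero) auto
  have cT: "cos T > 0" using T0 Tpi2 by (intro cos_gt_zero_pi) auto
  have bnd': "r * (sin T)\<^sup>2 \<le> eps * cos T" using bnd by (simp add: T_def \<omega>_def)
  have thab: "th s \<in> {0..2 * T}" if "s \<in> {a..b}" for s
    using that w0 by (auto simp: th_def T_def intro: mult_left_mono)
  define e where "e = cos T *\<^sub>R u + sin T *\<^sub>R v"
  define \<nu> where "\<nu> = sin T *\<^sub>R u + (- cos T) *\<^sub>R v"
  have ee: "e \<bullet> e = 1" unfolding e_def ortho_inner[OF uu vv uv] by (simp add: power2_eq_square[symmetric])
  have nn: "\<nu> \<bullet> \<nu> = 1" unfolding \<nu>_def ortho_inner[OF uu vv uv] by (simp add: power2_eq_square[symmetric])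
  have en: "e \<bullet> \<nu> = 0" unfolding e_def \<nu>_def ortho_inner[OF uu vv uv] by simp
  have ne: "\<nu> \<bullet> e = 0" using en by (simp add: inner_commute)
  have rep: "cos x *\<^sub>R e + sin y *\<^sub>R \<nu> = (cos x * cos T + sin y * sin T) *\<^sub>R u + (cos x * sin T - sin y * cos T) *\<^sub>R v" for x y
    by (simp add: e_def \<nu>_def algebra_simps)
  have \<alpha>rep: "\<forall>s\<in>{a..b}. \<alpha> s = cos (th s - T) *\<^sub>R e + sin (T - th s) *\<^sub>R \<nu>"
  proof
    fix s assume s: "s \<in> {a..b}"
    have m: "sin (T - th s) = - sin (th s - T)" by (metis minus_diff_eq sin_minus)
    have c1: "cos (th s - T) * cos T + sin (T - th s) * sin T = cos (th s)"
      using cos_add[of "th s - T" T] unfolding m by simp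
    have c2: "cos (th s - T) * sin T - sin (T - th s) * cos T = sin (th s)"
      using sin_add[of "th s - T" T] unfolding m by (simp add: algebra_simps)
    show "\<alpha> s = cos (th s - T) *\<^sub>R e + sin (T - th s) *\<^sub>R \<nu>"
      unfolding rep c1 c2 using \<alpha>t s by (simp add: th_def \<omega>_def)
  qed
  define \<rho> where "\<rho> = rho a b"
  note rp = rho_props[OF ab, folded \<rho>_def]
  have cth: "continuous_on X (\<lambda>s. cos (th s - T))" "continuous_on X (\<lambda>s. sin (T - th s))" for X
    by (auto simp: th_def intro!: continuous_intros)
  have intg: "F integrable_on {x..y}" if "continuous_on {a..b} F" "a \<le> x" "y \<le> b" for F :: "real \<Rightarrow> real" and x y
    using that by (intro integrable_continuous_interval) (auto elim: continuous_on_subset)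
  have cosint: "integral {x..y} (\<lambda>s. cos (th s - T)) = (sin (th y - T) - sin (th x - T)) / \<omega>" if "x \<le> y" for x y
    unfolding th_def by (rule int_cos) (use w0 that in auto)
  define Icos where "Icos = integral {a..b} (\<lambda>s. cos (th s - T))"
  have Icos: "Icos = 2 * sin T / \<omega>"
  proof -
    have "th b - T = T" "th a - T = - T" by (simp_all add: th_def T_def field_simps)
    then show ?thesis using cosint[of a b] ab by (simp add: Icos_def)
  qed
  have cpos: "cos (th s - T) > 0" if "s \<in> {a..b}" for s
    using thab[OF that] Tpi2 by (intro cos_gt_zero_pi) auto
  define J where "J = integral {a..b} (\<lambda>s. \<rho> s * cos (th s - T))"
  define m1 where "m1 = a + (b - a) / 4"
  define m2 where "m2 = b - (b - a) / 4"
  have m12: "a \<le> m1" "m1 \<le> m2" "m2 \<le> b" using ab unfolding m1_def m2_def by (simp_all add: field_simps)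
  have cJ: "continuous_on {a..b} (\<lambda>s. \<rho> s * cos (th s - T))"
    by (intro continuous_intros rp cth)
  have Jlow: "J \<ge> 2 * sin (T / 2) / \<omega>"
  proof -
    have s1: "integral {a..m1} (\<lambda>s. \<rho> s * cos (th s - T)) + integral {m1..b} (\<lambda>s. \<rho> s * cos (th s - T)) = J"
      unfolding J_def using m12 by (intro Henstock_Kurzweil_Integration.integral_combine intg[OF cJ]) auto
    have s2: "integral {m1..m2} (\<lambda>s. \<rho> s * cos (th s - T)) + integral {m2..b} (\<lambda>s. \<rho> s * cos (th s - T)) =
        integral {m1..b} (\<lambda>s. \<rho> s * cos (th s - T))"
      using m12 by (intro Henstock_Kurzweil_Integration.integral_combine intg[OF cJ]) auto
    have p1: "0 \<le> integral {a..m1} (\<lambda>s. \<rho> s * cos (th s - T))"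
      using m12 by (intro integral_nonneg intg[OF cJ]) (auto intro!: mult_nonneg_nonneg rp less_imp_le[OF cpos])
    have p3: "0 \<le> integral {m2..b} (\<lambda>s. \<rho> s * cos (th s - T))"
      using m12 by (intro integral_nonneg intg[OF cJ]) (auto intro!: mult_nonneg_nonneg rp less_imp_le[OF cpos])
    have "integral {m1..m2} (\<lambda>s. \<rho> s * cos (th s - T)) = integral {m1..m2} (\<lambda>s. cos (th s - T))"
      by (intro integral_cong) (simp add: rp(8) m1_def m2_def)
    also have "\<dots> = (sin (th m2 - T) - sin (th m1 - T)) / \<omega>" using cosint m12 by simp
    finally have im: "integral {m1..m2} (\<lambda>s. \<rho> s * cos (th s - T)) = (sin (th m2 - T) - sin (th m1 - T)) / \<omega>" .
    have h1: "th m2 - T = T / 2" and h2: "th m1 - T = - (T / 2)"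
      by (simp_all add: th_def T_def m1_def m2_def field_simps)
    have "integral {m1..m2} (\<lambda>s. \<rho> s * cos (th s - T)) = 2 * sin (T / 2) / \<omega>"
      using im unfolding h1 h2 by simp
    then show ?thesis using s1 s2 p1 p3 by linarith
  qed
  have sT2: "sin (T / 2) > 0" using T0 Tpi2 by (intro sin_gt_zero) auto
  have cT2: "cos (T / 2) < 1"
    using cos_monotone_0_pi[of 0 "T / 2"] T0 Tpi2 by simp
  have sTd: "sin T = 2 * sin (T / 2) * cos (T / 2)"
    using sin_double[of "T / 2"] by simp
  have JIcos: "Icos / 2 < J"
  proof -
    have "Icos / 2 = 2 * sin (T / 2) * cos (T / 2) / \<omega>" unfolding Icos sTd by simp
    also have "\<dots> < 2 * sin (T / 2) / \<omega>"
      using sT2 cT2 w0 by (intro divide_strict_right_mono) auto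
    finally show ?thesis using Jlow by simp
  qed
  have Icos0: "Icos > 0" using sT w0 by (simp add: Icos)
  have J0: "J > 0" using JIcos Icos0 by simp
  define lam where "lam = (k - 1) * Icos / J"
  have lam1: "1 + lam > 0"
  proof (cases "k < 1")
    case True
    have "(1 - k) * Icos \<le> (1 / 2) * Icos" by (rule mult_right_mono) (use k Icos0 in auto)
    then have "(1 - k) * Icos \<le> Icos / 2" by simp
    then have "(1 - k) * Icos < J" using JIcos by simp
    then have "(1 - k) * Icos / J < 1" using J0 by simp
    then show ?thesis by (simp add: lam_def algebra_simps diff_divide_distrib)
  next
    case False
    then have "lam \<ge> 0" using Icos0 J0 by (simp add: lam_def)
    then show ?thesis by simp
  qed
  define g where "g t = c + (c * lam) * \<rho> t" for t
  define gmin where "gmin = c * min 1 (1 + lam)"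
  have gmin0: "gmin > 0" using c0 lam1 by (simp add: gmin_def)
  have gge: "g t \<ge> gmin" for t
  proof -
    have "1 + lam * \<rho> t \<ge> min 1 (1 + lam)"
    proof (cases "lam \<ge> 0")
      case True then show ?thesis using rp(3)[of t] by simp
    next
      case False
      then have "lam * \<rho> t \<ge> lam * 1" using rp(4)[of t] by (intro mult_left_mono_neg) auto
      then show ?thesis by simp
    qed
    then have "c * (1 + lam * \<rho> t) \<ge> c * min 1 (1 + lam)" using c0 by simp
    then show ?thesis by (simp add: g_def gmin_def algebra_simps)
  qed
  have gpos: "g t > 0" for t using gge[of t] gmin0 by simp
  have cg: "continuous_on X g" for X unfolding g_def
    by (intro continuous_intros) (use rp in \<open>simp add: \<rho>_def\<close>)
  have sg: "smooth_on {a..b} g"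
  proof -
    have "smooth_on {a..b} (\<lambda>t. c + (c * lam) *\<^sub>R \<rho> t)"
      by (intro smooth_on_add smooth_on_const smooth_on_scaleR rp(1))
    then show ?thesis by (simp add: g_def[abs_def])
  qed
  have cgc: "continuous_on {a..b} (\<lambda>s. g s * cos (th s - T))" by (intro continuous_intros cg cth)
  have cgs: "continuous_on {a..b} (\<lambda>s. g s * sin (T - th s))" by (intro continuous_intros cg cth)
  define \<gamma> where "\<gamma> t = integral {a..t} (\<lambda>s. g s *\<^sub>R \<alpha> s)" for t
  define P where "P t = integral {a..t} (\<lambda>s. g s * cos (th s - T))" for t
  define Q where "Q t = integral {a..t} (\<lambda>s. g s * sin (T - th s))" for t
  have \<gamma>PQ: "\<gamma> t = P t *\<^sub>R e + Q t *\<^sub>R \<nu>" if t: "t \<in> {a..b}" for t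
    unfolding \<gamma>_def P_def Q_def
    by (rule int_decomp) (use \<alpha>rep t in \<open>auto intro: cg cth\<close>)
  have Pb: "P b = k * (c * Icos)"
  proof -
    have lj: "lam * J = (k - 1) * Icos" using J0 by (simp add: lam_def)
    have "(\<lambda>s. g s * cos (th s - T)) = (\<lambda>s. c * cos (th s - T) + (c * lam) * (\<rho> s * cos (th s - T)))"
      by (auto simp: g_def fun_eq_iff algebra_simps)
    then have "P b = integral {a..b} (\<lambda>s. c * cos (th s - T) + (c * lam) * (\<rho> s * cos (th s - T)))"
      by (simp add: P_def)
    also have "\<dots> = c * Icos + (c * lam) * J"
      unfolding Icos_def J_def
      by (subst integral_add) (auto intro!: intg continuous_intros cth rp(2) simp: integral_mult_right)
    also have "\<dots> = c * Icos + c * (lam * J)" by (simp add: mult.assoc)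
    also have "\<dots> = k * (c * Icos)" unfolding lj by (simp add: algebra_simps)
    finally show ?thesis .
  qed
  have cIcos: "c * Icos = 2 * r * sin T" using r0 c0 by (simp add: Icos \<omega>_def)
  define K where "K = P b"
  have K: "K = 2 * k * r * sin T" using Pb cIcos by (simp add: K_def)
  have K0: "K > 0" using K k r0 sT by simp
  have Qb: "Q b = 0"
  proof -
    define F where "F s = g s * sin (T - th s)" for s
    have "F (a + b - s) = - F s" for s
    proof -
      have "g (a + b - s) = g s" by (simp add: g_def rp(5))
      moreover have h: "T - th (a + b - s) = - (T - th s)" by (simp add: th_def T_def field_simps)
      moreover have "sin (T - th (a + b - s)) = - sin (T - th s)" by (simp only: h sin_minus)
      ultimately show ?thesis by (simp add: F_def)
    qed
    then have "integral {a..b} (\<lambda>s. F (a + b - s)) = - integral {a..b} F"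
      by (simp add: integral_neg)
    then have "integral {a..b} F = 0" using int_reflect[of a b F] by simp
    then show ?thesis by (simp add: Q_def F_def[abs_def])
  qed
  have sinth: "0 \<le> sin (th s)" "0 \<le> sin (2 * T - th s)" if "s \<in> {a..b}" for s
    using thab[OF that] Tpi2 by (auto intro!: sin_ge_zero)
  have int_split: "integral {a..t} F + integral {t..b} F = integral {a..b} F"
    if "continuous_on {a..b} F" "t \<in> {a..b}" for F :: "real \<Rightarrow> real" and t
    using that by (intro Henstock_Kurzweil_Integration.integral_combine intg) auto
  have Qnn: "0 \<le> Q t" if t: "t \<in> {a..b}" for t
  proof (cases "th t \<le> T")
    case True
    have "0 \<le> g s * sin (T - th s)" if "s \<in> {a..t}" for s
    proof -
      have "th s \<le> th t" using that w0 by (auto simp: th_def intro: mult_left_mono)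
      moreover have "0 \<le> th s" using that w0 by (auto simp: th_def)
      ultimately have "0 \<le> sin (T - th s)" using True T0 Tpi2 by (intro sin_ge_zero) auto
      then show ?thesis using gpos[of s] by simp
    qed
    then show ?thesis unfolding Q_def using t by (intro integral_nonneg intg[OF cgs]) auto
  next
    case False
    have "0 \<le> - (g s * sin (T - th s))" if "s \<in> {t..b}" for s
    proof -
      have "th t \<le> th s" using that w0 by (auto simp: th_def intro: mult_left_mono)
      moreover have "th s \<le> 2 * T" using thab[of s] that t by auto
      ultimately have "0 \<le> sin (th s - T)" using False T0 Tpi2 by (intro sin_ge_zero) auto
      moreover have "sin (T - th s) = - sin (th s - T)" by (metis minus_diff_eq sin_minus)
      ultimately show ?thesis using gpos[of s] by simp
    qed
    moreover have "(\<lambda>s. - (g s * sin (T - th s))) integrable_on {t..b}"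
      using t by (intro intg continuous_on_minus cgs) auto
    ultimately have "0 \<le> integral {t..b} (\<lambda>s. - (g s * sin (T - th s)))"
      by (intro integral_nonneg) auto
    then have "integral {t..b} (\<lambda>s. g s * sin (T - th s)) \<le> 0" by (simp add: integral_neg)
    then show ?thesis using int_split[OF cgs t] Qb by (simp add: Q_def)
  qed
  have id1: "sin T * (g s * cos (th s - T)) - cos T * (g s * sin (T - th s)) = g s * sin (th s)" for s
  proof -
    have "sin (th s) = sin ((th s - T) + T)" by simp
    also have "\<dots> = sin (th s - T) * cos T + cos (th s - T) * sin T" by (rule sin_add)
    finally have sa: "sin (th s) = sin (th s - T) * cos T + cos (th s - T) * sin T" .
    have m: "sin (T - th s) = - sin (th s - T)" by (metis minus_diff_eq sin_minus)
    show ?thesis unfolding sa m by (simp add: algebra_simps)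
  qed
  have id2: "sin T * (g s * cos (th s - T)) + cos T * (g s * sin (T - th s)) = g s * sin (2 * T - th s)" for s
  proof -
    have "sin (2 * T - th s) = sin (T + (T - th s))" by (simp add: algebra_simps)
    also have "\<dots> = sin T * cos (T - th s) + cos T * sin (T - th s)" by (rule sin_add)
    also have "cos (T - th s) = cos (th s - T)" by (metis cos_minus minus_diff_eq)
    finally show ?thesis by (simp add: algebra_simps)
  qed
  have ineq1: "cos T * Q t \<le> sin T * P t" if t: "t \<in> {a..b}" for t
  proof -
    have "sin T * P t - cos T * Q t = integral {a..t} (\<lambda>s. sin T * (g s * cos (th s - T)) - cos T * (g s * sin (T - th s)))"
    proof -
      have i1: "(\<lambda>s. sin T * (g s * cos (th s - T))) integrable_on {a..t}"
        using t by (intro intg continuous_on_mult continuous_on_const cgc) auto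
      have i2: "(\<lambda>s. cos T * (g s * sin (T - th s))) integrable_on {a..t}"
        using t by (intro intg continuous_on_mult continuous_on_const cgs) auto
      show ?thesis unfolding P_def Q_def integral_diff[OF i1 i2] integral_mult_right ..
    qed
    also have "\<dots> = integral {a..t} (\<lambda>s. g s * sin (th s))" by (simp add: id1)
    also have "\<dots> \<ge> 0"
    proof (rule integral_nonneg)
      show "(\<lambda>s. g s * sin (th s)) integrable_on {a..t}"
        using t by (intro intg continuous_on_mult cg) (auto simp: th_def intro!: continuous_intros)
      fix s assume "s \<in> {a..t}"
      then have "s \<in> {a..b}" using t by auto
      then show "0 \<le> g s * sin (th s)" using gpos[of s] sinth by simp
    qed
    finally show ?thesis by simp
  qed
  have ineq2: "cos T * Q t \<le> sin T * (K - P t)" if t: "t \<in> {a..b}" for t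
  proof -
    have KP: "K - P t = integral {t..b} (\<lambda>s. g s * cos (th s - T))"
      using int_split[OF cgc t] by (simp add: K_def P_def)
    have mQ: "- Q t = integral {t..b} (\<lambda>s. g s * sin (T - th s))"
      using int_split[OF cgs t] Qb by (simp add: Q_def)
    have i1: "(\<lambda>s. sin T * (g s * cos (th s - T))) integrable_on {t..b}"
      using t by (intro intg continuous_on_mult continuous_on_const cgc) auto
    have i2: "(\<lambda>s. cos T * (g s * sin (T - th s))) integrable_on {t..b}"
      using t by (intro intg continuous_on_mult continuous_on_const cgs) auto
    have "sin T * (K - P t) + cos T * (- Q t) = integral {t..b} (\<lambda>s. sin T * (g s * cos (th s - T)) + cos T * (g s * sin (T - th s)))"
      unfolding KP mQ integral_add[OF i1 i2] integral_mult_right ..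
    also have "\<dots> = integral {t..b} (\<lambda>s. g s * sin (2 * T - th s))" by (simp add: id2)
    also have "\<dots> \<ge> 0"
    proof (rule integral_nonneg)
      show "(\<lambda>s. g s * sin (2 * T - th s)) integrable_on {t..b}"
        using t by (intro intg continuous_on_mult cg) (auto simp: th_def intro!: continuous_intros)
      fix s assume "s \<in> {t..b}"
      then have "s \<in> {a..b}" using t by auto
      then show "0 \<le> g s * sin (2 * T - th s)" using gpos[of s] sinth by simp
    qed
    finally show ?thesis by simp
  qed
  have Pmono: "P s < P t" if st: "s \<in> {a..b}" "t \<in> {a..b}" "s < t" for s t
  proof -
    have "integral {a..s} (\<lambda>x. g x * cos (th x - T)) + integral {s..t} (\<lambda>x. g x * cos (th x - T)) = P t"
      unfolding P_def using st by (intro Henstock_Kurzweil_Integration.integral_combine intg[OF cgc]) auto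
    moreover have "integral {s..t} (\<lambda>x. 0) < integral {s..t} (\<lambda>x. g x * cos (th x - T))"
    proof (rule integral_less_real)
      show "continuous_on {s..t} (\<lambda>x. 0::real)" by simp
      show "continuous_on {s..t} (\<lambda>x. g x * cos (th x - T))"
        using st by (intro continuous_on_subset[OF cgc]) auto
      show "{s<..<t} \<noteq> {}" using st by auto
      fix x assume "x \<in> {s<..<t}"
      then have "x \<in> {a..b}" using st by auto
      then show "0 < g x * cos (th x - T)" using gpos[of x] cpos by simp
    qed
    ultimately show ?thesis by (simp add: P_def)
  qed
  have inj: "inj_on \<gamma> {a..b}"
  proof (rule inj_onI)
    fix s t assume st: "s \<in> {a..b}" "t \<in> {a..b}" "\<gamma> s = \<gamma> t"
    have "\<gamma> s \<bullet> e = P s" using \<gamma>PQ[OF st(1)] ee ne by (simp add: inner_add_left)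
    moreover have "\<gamma> t \<bullet> e = P t" using \<gamma>PQ[OF st(2)] ee ne by (simp add: inner_add_left)
    ultimately have "P s = P t" using st(3) by simp
    then show "s = t" using Pmono[of s t] Pmono[of t s] st by (cases "s < t"; cases "t < s") auto
  qed
  have c\<alpha>: "continuous_on {a..b} \<alpha>" by (rule smooth_on_continuous[OF sa])
  have sm\<gamma>: "smooth_on {a..b} \<gamma>"
  proof (rule smooth_on_derivI[where f'="\<lambda>t. g t *\<^sub>R \<alpha> t"])
    show "smooth_on {a..b} (\<lambda>t. g t *\<^sub>R \<alpha> t)" by (rule smooth_on_mult[OF sg sa])
    fix t assume "t \<in> {a..b}"
    then show "(\<gamma> has_vector_derivative g t *\<^sub>R \<alpha> t) (at t within {a..b})"
      unfolding \<gamma>_def[abs_def] by (intro integral_has_vector_derivative continuous_on_scaleR cg c\<alpha>)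
  qed
  define H where "H = k * eps"
  have H0: "H > 0" using k eps0 by (simp add: H_def)
  have iii: "K * sin T \<le> 2 * H * cos T"
  proof -
    have "2 * k * (r * (sin T)\<^sup>2) \<le> 2 * k * (eps * cos T)"
      by (rule mult_left_mono[OF bnd']) (use k in auto)
    then show ?thesis by (simp add: K H_def power2_eq_square algebra_simps)
  qed
  have \<gamma>a: "\<gamma> a = 0" by (simp add: \<gamma>_def)
  have \<gamma>b: "\<gamma> b = K *\<^sub>R e" using \<gamma>PQ[of b] ab Qb by (simp add: K_def)
  define x where "x = (K / 2) *\<^sub>R e + H *\<^sub>R \<nu>"
  have mid: "midpoint (\<gamma> a) (\<gamma> b) = (K / 2) *\<^sub>R e" by (simp add: \<gamma>a \<gamma>b midpoint_def)
  have nu1: "norm \<nu> = 1" using nn by (simp add: norm_eq_sqrt_inner)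
  have iso: "isosceles_triangle (\<gamma> a) (\<gamma> b) (k * eps) (convex hull {\<gamma> a, \<gamma> b, x})"
    unfolding isosceles_triangle_def
  proof (intro exI conjI)
    show "(x - midpoint (\<gamma> a) (\<gamma> b)) \<bullet> (\<gamma> b - \<gamma> a) = 0"
      unfolding mid x_def using ne by (simp add: \<gamma>a \<gamma>b)
    show "norm (x - midpoint (\<gamma> a) (\<gamma> b)) = k * eps"
      unfolding mid x_def using H0 nu1 by (simp add: H_def)
  qed (rule refl)
  have cont: "\<gamma> t \<in> convex hull {\<gamma> a, \<gamma> b, x}" if t: "t \<in> {a..b}" for t
  proof -
    define l2 where "l2 = Q t / H"
    define l1 where "l1 = P t / K - Q t / (2 * H)"
    define l0 where "l0 = 1 - l1 - l2"
    have q0: "0 \<le> Q t" by (rule Qnn[OF t])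
    have A: "Q t * K \<le> 2 * H * P t"
    proof -
      have "Q t * (K * sin T) \<le> Q t * (2 * H * cos T)" by (rule mult_left_mono[OF iii q0])
      also have "\<dots> = 2 * H * (cos T * Q t)" by (simp add: algebra_simps)
      also have "\<dots> \<le> 2 * H * (sin T * P t)" using ineq1[OF t] H0 by simp
      finally have "(Q t * K) * sin T \<le> (2 * H * P t) * sin T" by (simp add: algebra_simps)
      then show ?thesis using sT by simp
    qed
    have B: "Q t * K \<le> 2 * H * (K - P t)"
    proof -
      have "Q t * (K * sin T) \<le> Q t * (2 * H * cos T)" by (rule mult_left_mono[OF iii q0])
      also have "\<dots> = 2 * H * (cos T * Q t)" by (simp add: algebra_simps)
      also have "\<dots> \<le> 2 * H * (sin T * (K - P t))" using ineq2[OF t] H0 by simp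
      finally have "(Q t * K) * sin T \<le> (2 * H * (K - P t)) * sin T" by (simp add: algebra_simps)
      then show ?thesis using sT by simp
    qed
    have nl2: "0 \<le> l2" using q0 H0 by (simp add: l2_def)
    have nl1: "0 \<le> l1"
    proof -
      have "Q t / (2 * H) \<le> P t / K" using A H0 K0 by (simp add: field_simps)
      then show ?thesis by (simp add: l1_def)
    qed
    have nl0: "0 \<le> l0"
    proof -
      have "P t / K + Q t / (2 * H) \<le> 1" using B H0 K0 by (simp add: field_simps)
      then show ?thesis by (simp add: l0_def l1_def l2_def field_simps)
    qed
    have c1: "l1 * K + l2 * (K / 2) = P t" using H0 K0 by (simp add: l1_def l2_def field_simps)
    have c2: "l2 * H = Q t" using H0 by (simp add: l2_def)
    have "l0 *\<^sub>R \<gamma> a + l1 *\<^sub>R \<gamma> b + l2 *\<^sub>R x = (l1 * K + l2 * (K / 2)) *\<^sub>R e + (l2 * H) *\<^sub>R \<nu>"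
      by (simp add: \<gamma>a \<gamma>b x_def algebra_simps)
    also have "\<dots> = \<gamma> t" unfolding c1 c2 using \<gamma>PQ[OF t] by simp
    finally have eq: "\<gamma> t = l0 *\<^sub>R \<gamma> a + l1 *\<^sub>R \<gamma> b + l2 *\<^sub>R x" by simp
    have sum1: "l0 + l1 + l2 = 1" by (simp add: l0_def)
    show ?thesis unfolding convex_hull_3
      using eq nl0 nl1 nl2 sum1 by blast
  qed
  have susp: "suspension (k * eps) a b \<gamma>"
    unfolding suspension_def using sm\<gamma> inj iso cont by blast
  have endpt: "\<forall>t\<in>{a..b}. (t < a + (b - a) / 8 \<or> t > b - (b - a) / 8) \<longrightarrow> g t = c"
    using rp(6) rp(7) by (auto simp: g_def)
  have fin: "integral {a..b} (\<lambda>s. g s *\<^sub>R \<alpha> s) =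
       k *\<^sub>R (r *\<^sub>R (sin (c / r * (b - a)) *\<^sub>R u + (1 - cos (c / r * (b - a))) *\<^sub>R v))"
  proof -
    have tt: "c / r * (b - a) = 2 * T" by (simp add: T_def \<omega>_def)
    have "integral {a..b} (\<lambda>s. g s *\<^sub>R \<alpha> s) = K *\<^sub>R e" using \<gamma>b by (simp add: \<gamma>_def)
    also have "\<dots> = k *\<^sub>R ((2 * r * sin T) *\<^sub>R e)" by (simp add: K)
    also have "(2 * r * sin T) *\<^sub>R e = r *\<^sub>R (sin (2 * T) *\<^sub>R u + (1 - cos (2 * T)) *\<^sub>R v)"
      unfolding beta_half e_def ..
    finally show ?thesis unfolding tt .
  qed
  show ?thesis
  proof (intro exI[of _ g] conjI)
    show "smooth_on {a..b} g" by (rule sg)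
    show "\<forall>t\<in>{a..b}. g t > 0" using gpos by simp
    show "\<exists>\<delta>>0. \<forall>t\<in>{a..b}. (t < a + \<delta> \<or> t > b - \<delta>) \<longrightarrow> g t = c"
      using endpt ab by (intro exI[of _ "(b - a) / 8"]) auto
    show "suspension (k * eps) a b (\<lambda>t. integral {a..t} (\<lambda>s. g s *\<^sub>R \<alpha> s))"
      using susp by (simp add: \<gamma>_def[abs_def])
  qed (rule fin)
qed

theorem lemma6:
  fixes a b eps :: real and \<alpha> :: "real \<Rightarrow> real^3" and f :: "real \<Rightarrow> real"
  assumes "a < b"
    and "smooth_on {a..b} \<alpha>" and "\<forall>t\<in>{a..b}. \<alpha> t \<in> sphere 0 1"
    and "smooth_on {a..b} f" and "\<forall>t\<in>{a..b}. f t > 0"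
    and "round_suspension eps a b (\<lambda>t. integral {a..t} (\<lambda>s. f s *\<^sub>R \<alpha> s))"
  shows "\<forall>k\<in>{1/2..3/2}. \<exists>g :: real \<Rightarrow> real.
           smooth_on {a..b} g \<and> (\<forall>t\<in>{a..b}. g t > 0) \<and>
           (\<exists>\<delta>>0. \<forall>t\<in>{a..b}. (t < a + \<delta> \<or> t > b - \<delta>) \<longrightarrow> g t = f t) \<and>
           suspension (k * eps) a b (\<lambda>t. integral {a..t} (\<lambda>s. g s *\<^sub>R \<alpha> s)) \<and>
           integral {a..b} (\<lambda>s. g s *\<^sub>R \<alpha> s) - integral {a..a} (\<lambda>s. g s *\<^sub>R \<alpha> s)
             = k *\<^sub>R (integral {a..b} (\<lambda>s. f s *\<^sub>R \<alpha> s) - integral {a..a} (\<lambda>s. f s *\<^sub>R \<alpha> s))"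
proof
  fix k :: real assume k: "k \<in> {1/2..3/2}"
  obtain c r u v where st: "c > 0" "r > 0" "u \<bullet> u = 1" "v \<bullet> v = 1" "u \<bullet> v = 0"
    "\<forall>t\<in>{a..b}. f t = c"
    "\<forall>t\<in>{a..b}. \<alpha> t = cos (c / r * (t - a)) *\<^sub>R u + sin (c / r * (t - a)) *\<^sub>R v"
    "\<forall>t\<in>{a..b}. integral {a..t} (\<lambda>s. f s *\<^sub>R \<alpha> s) =
        r *\<^sub>R (sin (c / r * (t - a)) *\<^sub>R u + (1 - cos (c / r * (t - a))) *\<^sub>R v)"
    using circle_structure[OF assms] by blast
  have susp: "suspension eps a b (\<lambda>t. integral {a..t} (\<lambda>s. f s *\<^sub>R \<alpha> s))"
    using assms(6) by (simp add: round_suspension_def)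
  have w0: "c / r > 0" using st by simp
  note sb = susp_bound[OF assms(1) st(2) w0 st(3) st(4) st(5) st(8) susp]
  have kk: "1/2 \<le> k" "k \<le> 3/2" using k by auto
  note ex = construction[OF assms(1) st(1) st(2) st(3) st(4) st(5) assms(2) st(7) sb(1) sb(2) sb(3) kk(1) kk(2)]
  obtain g where g: "smooth_on {a..b} g" "\<forall>t\<in>{a..b}. g t > 0"
     "\<exists>\<delta>>0. \<forall>t\<in>{a..b}. (t < a + \<delta> \<or> t > b - \<delta>) \<longrightarrow> g t = c"
     "suspension (k * eps) a b (\<lambda>t. integral {a..t} (\<lambda>s. g s *\<^sub>R \<alpha> s))"
     "integral {a..b} (\<lambda>s. g s *\<^sub>R \<alpha> s) =
       k *\<^sub>R (r *\<^sub>R (sin (c / r * (b - a)) *\<^sub>R u + (1 - cos (c / r * (b - a))) *\<^sub>R v))"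
    using ex by blast
  show "\<exists>g :: real \<Rightarrow> real.
           smooth_on {a..b} g \<and> (\<forall>t\<in>{a..b}. g t > 0) \<and>
           (\<exists>\<delta>>0. \<forall>t\<in>{a..b}. (t < a + \<delta> \<or> t > b - \<delta>) \<longrightarrow> g t = f t) \<and>
           suspension (k * eps) a b (\<lambda>t. integral {a..t} (\<lambda>s. g s *\<^sub>R \<alpha> s)) \<and>
           integral {a..b} (\<lambda>s. g s *\<^sub>R \<alpha> s) - integral {a..a} (\<lambda>s. g s *\<^sub>R \<alpha> s)
             = k *\<^sub>R (integral {a..b} (\<lambda>s. f s *\<^sub>R \<alpha> s) - integral {a..a} (\<lambda>s. f s *\<^sub>R \<alpha> s))"
  proof (intro exI[of _ g] conjI)
    show "smooth_on {a..b} g" by (rule g(1))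
    show "\<forall>t\<in>{a..b}. g t > 0" by (rule g(2))
    show "\<exists>\<delta>>0. \<forall>t\<in>{a..b}. (t < a + \<delta> \<or> t > b - \<delta>) \<longrightarrow> g t = f t"
      using g(3) st(6) by metis
    show "suspension (k * eps) a b (\<lambda>t. integral {a..t} (\<lambda>s. g s *\<^sub>R \<alpha> s))" by (rule g(4))
    have bb: "b \<in> {a..b}" using assms(1) by simp
    show "integral {a..b} (\<lambda>s. g s *\<^sub>R \<alpha> s) - integral {a..a} (\<lambda>s. g s *\<^sub>R \<alpha> s)
             = k *\<^sub>R (integral {a..b} (\<lambda>s. f s *\<^sub>R \<alpha> s) - integral {a..a} (\<lambda>s. f s *\<^sub>R \<alpha> s))"
      using g(5) st(8) bb by simp
  qed
qed

end
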